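(* Let $T$ be a doubled graph in $\mathcal F$ that contains no antihole of length six. Then: (1) $T$ is either complete or has an even pair; (2) if $T$ is favorable, then $T$ has an even pair disjoint from its switchable component.
   Context: A trigraph $T$ consists of a finite set $V(T)$ and a map $\theta:\binom{V(T)}{2}\to\{-1,0,1\}$. Two distinct vertices $u,v$ are strongly adjacent if $\theta(uv)=1$, strongly antiadjacent if $\theta(uv)=-1$, and semiadjacent (a switchable pair) if $\theta(uv)=0$; they are adjacent if $\theta(uv)\in\{0,1\}$ and antiadjacent if $\theta(uv)\in\{0,-1\}$. $N(v)$ is the set of vertices adjacent to $v$. An edge (antiedge) is an adjacent (antiadjacent) pair; a strong edge (strong antiedge) is a strongly adjacent (strongly antiadjacent) pair. The complement $\overline T$ has vertex set $V(T)$ and adjacency function $-\theta$. For $X\subseteq V(T)$, $T|X$ is the trigraph on $X$ with $\theta$ restricted, and $T\setminus X=T|(V(T)\setminus X)$; $T$ contains $H$ if $H$ is isomorphic to some $T|X$. A clique is a set of pairwise adjacent vertices; $T$ is complete if $V(T)$ is a clique. A set $X$ is connected if the graph on $X$ whose edges are the adjacent pairs of $T|X$ is connected, and anticonnected if the graph on $X$ whose edges are the antiadjacent pairs of $T|X$ is connected; components (anticomponents) are maximal connected (anticonnected) subsets. A path is a sequence of distinct vertices $p_1,\dots,p_k$ such that $p_i,p_j$ are adjacent when $|i-j|=1$ and antiadjacent when $|i-j|>1$; its length is $k-1$. A hole of length $k\ge5$ consists of vertices $h_1,\dots,h_k$ with $h_i,h_j$ adjacent if $|i-j|\in\{1,k-1\}$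 and antiadjacent otherwise; an antihole is an induced subtrigraph whose complement is a hole of $\overline T$ (length = number of vertices). $T$ is Berge if it contains no hole of odd length and no antihole of odd length. An even pair of $T$ is a strongly antiadjacent pair $\{u,v\}$ such that every path from $u$ to $v$ in $T$ has even length. $\Sigma(T)$ is the graph on $V(T)$ whose edges are the switchable pairs of $T$; a switchable component is a connected component of $\Sigma(T)$ with at least two vertices. $\mathcal F$ is the class of Berge trigraphs $T$ such that: (1) $T$ has at most one switchable component, and it has at most two edges; (2) if the switchable component has exactly one edge $xy$, then $N(x)\cap N(y)=\emptyset$ (it is called small); (3) if it has two edges, with $v$ the vertex of degree two in $\Sigma(T)$ and $x,y$ its neighbours, then $v$ is strongly anticomplete to $V(T)\setminus\{v,x,y\}$, $x$ is strongly antiadjacent to $y$, and $N(x)\cap N(y)=\{v\}$ (it is called light). For $T\in\mathcal F$, $D$ denotes the vertex set of its switchable component ($D=\emptyset$ if $T$ has no switchable pair). A pair $\{u,v\}$ is disjoint from the switchable component if $\{u,v\}\cap D=\emptyset$. A trigraph $T\in\mathcal F$ is favorable if (1) $|V(T)|\ge5$; (2) $T$ has a strongly antiadjacent pair $\{u,v\}$ disjoint from $D$; and (3) if $D=\{x,y\}$ is small, then at least one of $V(T)\setminus(D\cup N(x))$, $V(T)\setminus(D\cup N(y))$ is not a clique. A good partition of $T$ is a partition $(X,Y)$ of $V(T)$ such that every component of $T|X$ and every anticomponent of $T|Y$ has at most two vertices, no switchable pair has one end in $X$ and the other in $Y$, and for every component $C_x$ of $T|X$ and every anticomponent $C_y$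 of $T|Y$, every vertex of $C_x\cup C_y$ is incident with at most one strong edge and at most one strong antiedge between $C_x$ and $C_y$. $T$ is a doubled graph if it has a good partition. *)

theory Defs
  imports Main
begin

definition trigraph :: "'a set \<Rightarrow> ('a \<Rightarrow> 'a \<Rightarrow> int) \<Rightarrow> bool" where
  "trigraph V \<theta> \<longleftrightarrow> finite V \<and>
     (\<forall>u\<in>V. \<forall>v\<in>V. u \<noteq> v \<longrightarrow> \<theta> u v = \<theta> v u \<and> \<theta> u v \<in> {-1, 0, 1})"

definition adj :: "('a \<Rightarrow> 'a \<Rightarrow> int) \<Rightarrow> 'a \<Rightarrow> 'a \<Rightarrow> bool" where
  "adj \<theta> u v \<longleftrightarrow> u \<noteq> v \<and> \<theta> u v \<in> {0, 1}"

definition antiadj :: "('a \<Rightarrow> 'a \<Rightarrow> int) \<Rightarrow> 'a \<Rightarrow> 'a \<Rightarrow> bool" where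
  "antiadj \<theta> u v \<longleftrightarrow> u \<noteq> v \<and> \<theta> u v \<in> {0, -1}"

definition nbhd :: "'a set \<Rightarrow> ('a \<Rightarrow> 'a \<Rightarrow> int) \<Rightarrow> 'a \<Rightarrow> 'a set" where
  "nbhd V \<theta> v = {u \<in> V. adj \<theta> v u}"

definition clique :: "('a \<Rightarrow> 'a \<Rightarrow> int) \<Rightarrow> 'a set \<Rightarrow> bool" where
  "clique \<theta> X \<longleftrightarrow> (\<forall>u\<in>X. \<forall>v\<in>X. u \<noteq> v \<longrightarrow> adj \<theta> u v)"

definition complete_tg :: "'a set \<Rightarrow> ('a \<Rightarrow> 'a \<Rightarrow> int) \<Rightarrow> bool" where
  "complete_tg V \<theta> \<longleftrightarrow> clique \<theta> V"

definition is_path :: "'a set \<Rightarrow> ('a \<Rightarrow> 'a \<Rightarrow> int) \<Rightarrow> 'a list \<Rightarrow> bool" where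
  "is_path V \<theta> ps \<longleftrightarrow> ps \<noteq> [] \<and> distinct ps \<and> set ps \<subseteq> V \<and>
     (\<forall>i<length ps. \<forall>j<length ps.
        (i + 1 = j \<or> j + 1 = i \<longrightarrow> adj \<theta> (ps ! i) (ps ! j)) \<and>
        (i + 1 < j \<or> j + 1 < i \<longrightarrow> antiadj \<theta> (ps ! i) (ps ! j)))"

definition is_hole :: "'a set \<Rightarrow> ('a \<Rightarrow> 'a \<Rightarrow> int) \<Rightarrow> 'a list \<Rightarrow> bool" where
  "is_hole V \<theta> hs \<longleftrightarrow> length hs \<ge> 5 \<and> distinct hs \<and> set hs \<subseteq> V \<and>
     (\<forall>i<length hs. \<forall>j<length hs. i \<noteq> j \<longrightarrow>
        (if j = Suc i mod length hs \<or> i = Suc j mod length hs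
         then adj \<theta> (hs ! i) (hs ! j) else antiadj \<theta> (hs ! i) (hs ! j)))"

text \<open>Antihole: a hole of the complement trigraph (adjacency function -theta).\<close>
definition is_antihole :: "'a set \<Rightarrow> ('a \<Rightarrow> 'a \<Rightarrow> int) \<Rightarrow> 'a list \<Rightarrow> bool" where
  "is_antihole V \<theta> hs \<longleftrightarrow> is_hole V (\<lambda>u v. - \<theta> u v) hs"

definition berge :: "'a set \<Rightarrow> ('a \<Rightarrow> 'a \<Rightarrow> int) \<Rightarrow> bool" where
  "berge V \<theta> \<longleftrightarrow> trigraph V \<theta> \<and>
     \<not> (\<exists>hs. is_hole V \<theta> hs \<and> odd (length hs)) \<and>
     \<not> (\<exists>hs. is_antihole V \<theta> hs \<and> odd (length hs))"

definition even_pair :: "'a set \<Rightarrow> ('a \<Rightarrow> 'a \<Rightarrow> int) \<Rightarrow> 'a \<Rightarrow> 'a \<Rightarrow> bool" where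
  "even_pair V \<theta> u v \<longleftrightarrow> u \<in> V \<and> v \<in> V \<and> u \<noteq> v \<and> \<theta> u v = -1 \<and>
     (\<forall>ps. is_path V \<theta> ps \<and> hd ps = u \<and> last ps = v \<longrightarrow> even (length ps - 1))"

definition sw_rel :: "'a set \<Rightarrow> ('a \<Rightarrow> 'a \<Rightarrow> int) \<Rightarrow> ('a \<times> 'a) set" where
  "sw_rel V \<theta> = {(u, v). u \<in> V \<and> v \<in> V \<and> u \<noteq> v \<and> \<theta> u v = 0}"

definition sw_components :: "'a set \<Rightarrow> ('a \<Rightarrow> 'a \<Rightarrow> int) \<Rightarrow> 'a set set" where
  "sw_components V \<theta> =
     {C. \<exists>v\<in>V. C = {u. (v, u) \<in> (sw_rel V \<theta>)\<^sup>*} \<and> card C \<ge> 2}"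

definition sw_edges :: "'a set \<Rightarrow> ('a \<Rightarrow> 'a \<Rightarrow> int) \<Rightarrow> 'a set \<Rightarrow> 'a set set" where
  "sw_edges V \<theta> C = {{u, v} | u v. u \<in> C \<and> v \<in> C \<and> (u, v) \<in> sw_rel V \<theta>}"

text \<open>D: the vertex set of the switchable component (empty if there is none).\<close>
definition sw_D :: "'a set \<Rightarrow> ('a \<Rightarrow> 'a \<Rightarrow> int) \<Rightarrow> 'a set" where
  "sw_D V \<theta> = \<Union> (sw_components V \<theta>)"

definition class_F :: "'a set \<Rightarrow> ('a \<Rightarrow> 'a \<Rightarrow> int) \<Rightarrow> bool" where
  "class_F V \<theta> \<longleftrightarrow> berge V \<theta> \<and>
     (\<forall>C\<in>sw_components V \<theta>. \<forall>C'\<in>sw_components V \<theta>. C = C') \<and>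
     (\<forall>C\<in>sw_components V \<theta>.
        card (sw_edges V \<theta> C) \<le> 2 \<and>
        (\<forall>x y. sw_edges V \<theta> C = {{x, y}} \<longrightarrow> nbhd V \<theta> x \<inter> nbhd V \<theta> y = {}) \<and>
        (\<forall>v x y. x \<noteq> y \<and> sw_edges V \<theta> C = {{v, x}, {v, y}} \<longrightarrow>
           (\<forall>w\<in>V - {v, x, y}. \<theta> v w = -1) \<and> \<theta> x y = -1 \<and>
           nbhd V \<theta> x \<inter> nbhd V \<theta> y = {v}))"

definition favorable :: "'a set \<Rightarrow> ('a \<Rightarrow> 'a \<Rightarrow> int) \<Rightarrow> bool" where
  "favorable V \<theta> \<longleftrightarrow> class_F V \<theta> \<and> card V \<ge> 5 \<and>
     (\<exists>u\<in>V. \<exists>v\<in>V. u \<noteq> v \<and> \<theta> u v = -1 \<and> u \<notin> sw_D V \<theta> \<and> v \<notin> sw_D V \<theta>) \<and>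
     (\<forall>x y. x \<noteq> y \<and> sw_D V \<theta> = {x, y} \<longrightarrow>
        \<not> clique \<theta> (V - (sw_D V \<theta> \<union> nbhd V \<theta> x)) \<or>
        \<not> clique \<theta> (V - (sw_D V \<theta> \<union> nbhd V \<theta> y)))"

text \<open>Components of T|X w.r.t. a relation R (adjacency gives components,
  antiadjacency gives anticomponents).\<close>
definition comps_of :: "'a set \<Rightarrow> ('a \<Rightarrow> 'a \<Rightarrow> bool) \<Rightarrow> 'a set set" where
  "comps_of X R = {{u \<in> X. (v, u) \<in> {(a, b). a \<in> X \<and> b \<in> X \<and> R a b}\<^sup>*} | v. v \<in> X}"

definition good_partition :: "'a set \<Rightarrow> ('a \<Rightarrow> 'a \<Rightarrow> int) \<Rightarrow> 'a set \<Rightarrow> 'a set \<Rightarrow> bool" where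
  "good_partition V \<theta> X Y \<longleftrightarrow> X \<union> Y = V \<and> X \<inter> Y = {} \<and>
     (\<forall>C\<in>comps_of X (adj \<theta>). card C \<le> 2) \<and>
     (\<forall>C\<in>comps_of Y (antiadj \<theta>). card C \<le> 2) \<and>
     (\<forall>x\<in>X. \<forall>y\<in>Y. \<theta> x y \<noteq> 0) \<and>
     (\<forall>Cx\<in>comps_of X (adj \<theta>). \<forall>Cy\<in>comps_of Y (antiadj \<theta>). \<forall>w\<in>Cx \<union> Cy.
        card {z. ((w \<in> Cx \<and> z \<in> Cy) \<or> (w \<in> Cy \<and> z \<in> Cx)) \<and> \<theta> w z = 1} \<le> 1 \<and>
        card {z. ((w \<in> Cx \<and> z \<in> Cy) \<or> (w \<in> Cy \<and> z \<in> Cx)) \<and> \<theta> w z = -1} \<le> 1)"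

definition doubled_graph :: "'a set \<Rightarrow> ('a \<Rightarrow> 'a \<Rightarrow> int) \<Rightarrow> bool" where
  "doubled_graph V \<theta> \<longleftrightarrow> (\<exists>X Y. good_partition V \<theta> X Y)"

end

theory Submission
  imports Defs
begin

definition S1 :: "'a set \<Rightarrow> ('a \<Rightarrow> 'a \<Rightarrow> int) \<Rightarrow> 'a \<Rightarrow> 'a \<Rightarrow> 'a set" where
  "S1 V \<theta> u v = {w\<in>V. adj \<theta> u w \<and> \<theta> w v \<noteq> 1}"
definition S2 :: "'a set \<Rightarrow> ('a \<Rightarrow> 'a \<Rightarrow> int) \<Rightarrow> 'a \<Rightarrow> 'a \<Rightarrow> 'a set" where
  "S2 V \<theta> u v = {z\<in>V. \<exists>w\<in>S1 V \<theta> u v. adj \<theta> w z \<and> z \<noteq> u \<and> z \<noteq> v \<and> \<theta> z u \<noteq> 1}"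
definition Gp :: "'a set \<Rightarrow> ('a \<Rightarrow> 'a \<Rightarrow> int) \<Rightarrow> 'a \<Rightarrow> 'a \<Rightarrow> bool" where
  "Gp V \<theta> u v \<longleftrightarrow> u \<in> V \<and> v \<in> V \<and> u \<noteq> v \<and> \<theta> u v = -1 \<and>
     (S2 V \<theta> u v = {} \<or> S2 V \<theta> v u = {} \<or> (\<exists>c. S2 V \<theta> u v \<subseteq> {c} \<and> S2 V \<theta> v u \<subseteq> {c}))"

lemma path_adj: "is_path V \<theta> ps \<Longrightarrow> j < length ps \<Longrightarrow> i + 1 = j \<Longrightarrow> adj \<theta> (ps!i) (ps!j)"
  unfolding is_path_def by auto
lemma path_adj': "is_path V \<theta> ps \<Longrightarrow> j < length ps \<Longrightarrow> i + 1 = j \<Longrightarrow> adj \<theta> (ps!j) (ps!i)"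
  unfolding is_path_def by auto
lemma path_anti: "is_path V \<theta> ps \<Longrightarrow> j < length ps \<Longrightarrow> i + 1 < j \<Longrightarrow> antiadj \<theta> (ps!i) (ps!j)"
  unfolding is_path_def by auto
lemma path_anti': "is_path V \<theta> ps \<Longrightarrow> j < length ps \<Longrightarrow> i + 1 < j \<Longrightarrow> antiadj \<theta> (ps!j) (ps!i)"
  unfolding is_path_def by auto
lemma path_in: "is_path V \<theta> ps \<Longrightarrow> i < length ps \<Longrightarrow> ps!i \<in> V"
  unfolding is_path_def by auto
lemma path_dist: "is_path V \<theta> ps \<Longrightarrow> i < length ps \<Longrightarrow> j < length ps \<Longrightarrow> ps!i = ps!j \<Longrightarrow> i = j"
  unfolding is_path_def using nth_eq_iff_index_eq by blast

lemma path_neq: "is_path V \<theta> ps \<Longrightarrow> i < length ps \<Longrightarrow> j < length ps \<Longrightarrow> i \<noteq> j \<Longrightarrow> ps!i \<noteq> ps!j"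
  using path_dist by blast

lemma Gp_even:
  assumes tg: "trigraph V \<theta>" and G: "Gp V \<theta> u v"
  shows "even_pair V \<theta> u v"
  unfolding even_pair_def
proof (intro conjI allI impI)
  show "u \<in> V" "v \<in> V" "u \<noteq> v" "\<theta> u v = -1" using G unfolding Gp_def by auto
  fix ps assume P: "is_path V \<theta> ps \<and> hd ps = u \<and> last ps = v"
  hence p: "is_path V \<theta> ps" and h: "ps!0 = u" and l: "ps!(length ps - 1) = v"
    by (auto simp: is_path_def hd_conv_nth last_conv_nth)
  define k where "k = length ps"
  have k1: "k \<ge> 1" using p unfolding is_path_def k_def by (simp add: Suc_le_eq)
  have sym: "\<And>a b. a \<in> V \<Longrightarrow> b \<in> V \<Longrightarrow> a \<noteq> b \<Longrightarrow> \<theta> a b = \<theta> b a"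
    using tg unfolding trigraph_def by auto
  have uv: "u \<noteq> v" "\<theta> u v = -1" "u \<in> V" "v \<in> V" using G unfolding Gp_def by auto
  consider "k = 1" | "k = 2" | "k = 3" | "k \<ge> 4" using k1 by linarith
  then show "even (length ps - 1)"
  proof cases
    case 1 then show ?thesis using h l uv k_def by auto
  next
    case 2
    have "adj \<theta> (ps!0) (ps!1)" using path_adj[OF p, of 1 0] 2 k_def by auto
    then show ?thesis using h l uv 2 k_def by (auto simp: adj_def)
  next
    case 3 then show ?thesis using k_def by auto
  next
    case 4
    have in1: "ps!1 \<in> V" "ps!2 \<in> V" "ps!(k-2) \<in> V" "ps!(k-3) \<in> V"
      using path_in[OF p] 4 k_def by auto
    have a01: "adj \<theta> u (ps!1)" using path_adj[OF p, of 1 0] 4 h k_def by auto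
    have a12: "adj \<theta> (ps!1) (ps!2)" using path_adj[OF p, of 2 1] 4 k_def by auto
    have n1v: "antiadj \<theta> (ps!1) v" using path_anti[OF p, of "k-1" 1] 4 l k_def by auto
    have n02: "antiadj \<theta> u (ps!2)" using path_anti[OF p, of 2 0] 4 h k_def by auto
    have d2u: "ps!2 \<noteq> u" unfolding h[symmetric] by (rule path_neq[OF p]) (use 4 k_def in auto)
    have d2v: "ps!2 \<noteq> v" unfolding l[symmetric] by (rule path_neq[OF p]) (use 4 k_def in auto)
    have s1: "ps!1 \<in> S1 V \<theta> u v" unfolding S1_def using in1 a01 n1v by (auto simp: adj_def antiadj_def)
    have "\<theta> (ps!2) u \<noteq> 1" using n02 sym[of u "ps!2"] in1 uv d2u by (auto simp: antiadj_def)
    hence A: "ps!2 \<in> S2 V \<theta> u v" unfolding S2_def using s1 a12 d2u d2v in1 by auto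
    have b01: "adj \<theta> v (ps!(k-2))" using path_adj'[OF p, of "k-1" "k-2"] 4 l k_def by auto
    have b12: "adj \<theta> (ps!(k-2)) (ps!(k-3))" using path_adj'[OF p, of "k-2" "k-3"] 4 k_def by auto
    have m1u: "antiadj \<theta> (ps!(k-2)) u" using path_anti'[OF p, of "k-2" 0] 4 h k_def by auto
    have m02: "antiadj \<theta> (ps!(k-3)) v" using path_anti[OF p, of "k-1" "k-3"] 4 l k_def by auto
    have e2v: "ps!(k-3) \<noteq> v" unfolding l[symmetric] by (rule path_neq[OF p]) (use 4 k_def in auto)
    have e2u: "ps!(k-3) \<noteq> u" unfolding h[symmetric] by (rule path_neq[OF p]) (use 4 k_def in auto)
    have t1: "ps!(k-2) \<in> S1 V \<theta> v u" unfolding S1_def using in1 b01 m1u by (auto simp: adj_def antiadj_def)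
    have "\<theta> (ps!(k-3)) v \<noteq> 1" using m02 by (auto simp: antiadj_def)
    hence B: "ps!(k-3) \<in> S2 V \<theta> v u" unfolding S2_def using t1 b12 e2u e2v in1 by auto
    from G have "S2 V \<theta> u v = {} \<or> S2 V \<theta> v u = {} \<or> (\<exists>c. S2 V \<theta> u v \<subseteq> {c} \<and> S2 V \<theta> v u \<subseteq> {c})"
      unfolding Gp_def by auto
    then obtain c where "S2 V \<theta> u v \<subseteq> {c}" "S2 V \<theta> v u \<subseteq> {c}" using A B by blast
    hence "ps!2 = ps!(k-3)" using A B by auto
    hence "2 = k - 3" using path_dist[OF p, of 2 "k-3"] 4 k_def by auto
    hence "length ps = 5" using 4 k_def by arith
    then show ?thesis by simp
  qed
qed

definition cmp :: "'a set \<Rightarrow> ('a \<Rightarrow> 'a \<Rightarrow> bool) \<Rightarrow> 'a \<Rightarrow> 'a set" where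
  "cmp S R x = {u \<in> S. (x, u) \<in> {(a, b). a \<in> S \<and> b \<in> S \<and> R a b}\<^sup>*}"

lemma cmp_in: "x \<in> S \<Longrightarrow> cmp S R x \<in> comps_of S R"
  unfolding cmp_def comps_of_def by blast
lemma cmp_self: "x \<in> S \<Longrightarrow> x \<in> cmp S R x"
  unfolding cmp_def by auto
lemma cmp_step: "x \<in> S \<Longrightarrow> w \<in> S \<Longrightarrow> R x w \<Longrightarrow> w \<in> cmp S R x"
  unfolding cmp_def by auto
lemma cmp_sub: "cmp S R x \<subseteq> S"
  unfolding cmp_def by auto

locale dg =
  fixes V :: "'a set" and \<theta> :: "'a \<Rightarrow> 'a \<Rightarrow> int" and X Y :: "'a set"
  assumes tg: "trigraph V \<theta>" and gp: "good_partition V \<theta> X Y"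
begin

lemma finV: "finite V" using tg unfolding trigraph_def by auto
lemma XY: "X \<union> Y = V" "X \<inter> Y = {}" using gp unfolding good_partition_def by auto
lemma XV: "x \<in> X \<Longrightarrow> x \<in> V" using XY by auto
lemma YV: "x \<in> Y \<Longrightarrow> x \<in> V" using XY by auto
lemma XnY: "x \<in> X \<Longrightarrow> x \<notin> Y" using XY by auto
lemma sym: "u \<in> V \<Longrightarrow> v \<in> V \<Longrightarrow> u \<noteq> v \<Longrightarrow> \<theta> u v = \<theta> v u"
  using tg unfolding trigraph_def by auto
lemma vals: "u \<in> V \<Longrightarrow> v \<in> V \<Longrightarrow> u \<noteq> v \<Longrightarrow> \<theta> u v = -1 \<or> \<theta> u v = 0 \<or> \<theta> u v = 1"
  using tg unfolding trigraph_def by auto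
lemma adj_iff: "u \<in> V \<Longrightarrow> v \<in> V \<Longrightarrow> adj \<theta> u v \<longleftrightarrow> u \<noteq> v \<and> \<theta> u v \<noteq> -1"
  using vals[of u v] unfolding adj_def by auto
lemma anti_iff: "u \<in> V \<Longrightarrow> v \<in> V \<Longrightarrow> antiadj \<theta> u v \<longleftrightarrow> u \<noteq> v \<and> \<theta> u v \<noteq> 1"
  using vals[of u v] unfolding antiadj_def by auto
lemma adj_sym: "u \<in> V \<Longrightarrow> v \<in> V \<Longrightarrow> adj \<theta> u v \<longleftrightarrow> adj \<theta> v u"
  using sym[of u v] unfolding adj_def by auto
lemma anti_sym: "u \<in> V \<Longrightarrow> v \<in> V \<Longrightarrow> antiadj \<theta> u v \<longleftrightarrow> antiadj \<theta> v u"
  using sym[of u v] unfolding antiadj_def by auto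

lemma XA: assumes "x \<in> X" "w \<in> X" "w' \<in> X" "adj \<theta> x w" "adj \<theta> x w'" shows "w = w'"
proof (rule ccontr)
  assume ne: "w \<noteq> w'"
  let ?C = "cmp X (adj \<theta>) x"
  have "card ?C \<le> 2" using gp cmp_in[OF assms(1), of "adj \<theta>"] unfolding good_partition_def by auto
  moreover have "{x, w, w'} \<subseteq> ?C" using cmp_self[OF assms(1)] cmp_step[where R="adj \<theta>", OF assms(1,2,4)]
      cmp_step[where R="adj \<theta>", OF assms(1,3,5)] by blast
  moreover have "finite ?C" using cmp_sub[of X "adj \<theta>" x] XY finV finite_subset by blast
  moreover have "card {x, w, w'} = 3" using ne assms(4,5) unfolding adj_def by auto
  ultimately show False using card_mono[of ?C "{x, w, w'}"] by linarith
qed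

lemma YA: assumes "x \<in> Y" "w \<in> Y" "w' \<in> Y" "antiadj \<theta> x w" "antiadj \<theta> x w'" shows "w = w'"
proof (rule ccontr)
  assume ne: "w \<noteq> w'"
  let ?C = "cmp Y (antiadj \<theta>) x"
  have "card ?C \<le> 2" using gp cmp_in[OF assms(1), of "antiadj \<theta>"] unfolding good_partition_def by auto
  moreover have "{x, w, w'} \<subseteq> ?C" using cmp_self[OF assms(1)] cmp_step[where R="antiadj \<theta>", OF assms(1,2,4)]
      cmp_step[where R="antiadj \<theta>", OF assms(1,3,5)] by blast
  moreover have "finite ?C" using cmp_sub[of Y "antiadj \<theta>" x] XY finV finite_subset by blast
  moreover have "card {x, w, w'} = 3" using ne assms(4,5) unfolding antiadj_def by auto
  ultimately show False using card_mono[of ?C "{x, w, w'}"] by linarith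
qed

lemma XY0: "x \<in> X \<Longrightarrow> y \<in> Y \<Longrightarrow> \<theta> x y \<noteq> 0"
  using gp unfolding good_partition_def by auto
lemma YX0: "x \<in> X \<Longrightarrow> y \<in> Y \<Longrightarrow> \<theta> y x \<noteq> 0"
  using XY0 sym XV YV XnY by metis

lemma XYv: "x \<in> X \<Longrightarrow> y \<in> Y \<Longrightarrow> \<theta> x y = 1 \<or> \<theta> x y = -1"
  using XY0 vals XV YV XnY by metis
lemma YXv: "x \<in> X \<Longrightarrow> y \<in> Y \<Longrightarrow> \<theta> y x = 1 \<or> \<theta> y x = -1"
  using XYv sym XV YV XnY by metis

lemma cardle1: "finite A \<Longrightarrow> card A \<le> 1 \<Longrightarrow> a \<in> A \<Longrightarrow> b \<in> A \<Longrightarrow> a = b"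
  using card_le_Suc0_iff_eq[of A] by auto

lemma XYP: assumes "x \<in> X" "y \<in> Y" "y' \<in> Y" "antiadj \<theta> y y'"
  shows "(\<theta> x y = 1 \<and> \<theta> x y' = -1) \<or> (\<theta> x y = -1 \<and> \<theta> x y' = 1)"
proof -
  let ?Cx = "cmp X (adj \<theta>) x" and ?Cy = "cmp Y (antiadj \<theta>) y"
  have c: "?Cx \<in> comps_of X (adj \<theta>)" "?Cy \<in> comps_of Y (antiadj \<theta>)"
    using cmp_in[OF assms(1)] cmp_in[OF assms(2)] by auto
  have m: "x \<in> ?Cx" "y \<in> ?Cy" "y' \<in> ?Cy"
    using cmp_self[OF assms(1)] cmp_self[OF assms(2)] cmp_step[where R="antiadj \<theta>", OF assms(2,3,4)] by auto
  have "?Cx \<union> ?Cy \<subseteq> V" using cmp_sub[of X "adj \<theta>" x] cmp_sub[of Y "antiadj \<theta>" y] XY by blast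
  hence fin: "finite (?Cx \<union> ?Cy)" using finite_subset finV by blast
  have yy: "y \<noteq> y'" using assms(4) unfolding antiadj_def by auto
  have h: "card {z. ((x \<in> ?Cx \<and> z \<in> ?Cy) \<or> (x \<in> ?Cy \<and> z \<in> ?Cx)) \<and> \<theta> x z = 1} \<le> 1 \<and>
           card {z. ((x \<in> ?Cx \<and> z \<in> ?Cy) \<or> (x \<in> ?Cy \<and> z \<in> ?Cx)) \<and> \<theta> x z = -1} \<le> 1"
    using gp c m(1) unfolding good_partition_def by blast
  have f1: "finite {z. ((x \<in> ?Cx \<and> z \<in> ?Cy) \<or> (x \<in> ?Cy \<and> z \<in> ?Cx)) \<and> \<theta> x z = 1}"
    by (rule finite_subset[OF _ fin]) auto
  have f2: "finite {z. ((x \<in> ?Cx \<and> z \<in> ?Cy) \<or> (x \<in> ?Cy \<and> z \<in> ?Cx)) \<and> \<theta> x z = -1}"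
    by (rule finite_subset[OF _ fin]) auto
  have "\<not> (\<theta> x y = 1 \<and> \<theta> x y' = 1)"
    using cardle1[OF f1 conjunct1[OF h], of y y'] m yy by auto
  moreover have "\<not> (\<theta> x y = -1 \<and> \<theta> x y' = -1)"
    using cardle1[OF f2 conjunct2[OF h], of y y'] m yy by auto
  ultimately show ?thesis using XYv[OF assms(1,2)] XYv[OF assms(1,3)] by auto
qed

lemma YXP: assumes "y \<in> Y" "x \<in> X" "x' \<in> X" "adj \<theta> x x'"
  shows "(\<theta> y x = 1 \<and> \<theta> y x' = -1) \<or> (\<theta> y x = -1 \<and> \<theta> y x' = 1)"
proof -
  let ?Cx = "cmp X (adj \<theta>) x" and ?Cy = "cmp Y (antiadj \<theta>) y"
  have c: "?Cx \<in> comps_of X (adj \<theta>)" "?Cy \<in> comps_of Y (antiadj \<theta>)"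
    using cmp_in[OF assms(2)] cmp_in[OF assms(1)] by auto
  have m: "x \<in> ?Cx" "x' \<in> ?Cx" "y \<in> ?Cy"
    using cmp_self[OF assms(2)] cmp_self[OF assms(1)] cmp_step[where R="adj \<theta>", OF assms(2,3,4)] by auto
  have "?Cx \<union> ?Cy \<subseteq> V" using cmp_sub[of X "adj \<theta>" x] cmp_sub[of Y "antiadj \<theta>" y] XY by blast
  hence fin: "finite (?Cx \<union> ?Cy)" using finite_subset finV by blast
  have yy: "x \<noteq> x'" using assms(4) unfolding adj_def by auto
  have yx: "y \<notin> ?Cx" using XnY cmp_sub[of X "adj \<theta>" x] assms(1) by blast
  have h: "card {z. ((y \<in> ?Cx \<and> z \<in> ?Cy) \<or> (y \<in> ?Cy \<and> z \<in> ?Cx)) \<and> \<theta> y z = 1} \<le> 1 \<and>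
           card {z. ((y \<in> ?Cx \<and> z \<in> ?Cy) \<or> (y \<in> ?Cy \<and> z \<in> ?Cx)) \<and> \<theta> y z = -1} \<le> 1"
    using gp c m(3) unfolding good_partition_def by blast
  have f1: "finite {z. ((y \<in> ?Cx \<and> z \<in> ?Cy) \<or> (y \<in> ?Cy \<and> z \<in> ?Cx)) \<and> \<theta> y z = 1}"
    by (rule finite_subset[OF _ fin]) auto
  have f2: "finite {z. ((y \<in> ?Cx \<and> z \<in> ?Cy) \<or> (y \<in> ?Cy \<and> z \<in> ?Cx)) \<and> \<theta> y z = -1}"
    by (rule finite_subset[OF _ fin]) auto
  have "\<not> (\<theta> y x = 1 \<and> \<theta> y x' = 1)"
    using cardle1[OF f1 conjunct1[OF h], of x x'] m yy by auto
  moreover have "\<not> (\<theta> y x = -1 \<and> \<theta> y x' = -1)"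
    using cardle1[OF f2 conjunct2[OF h], of x x'] m yy by auto
  ultimately show ?thesis using YXv[OF assms(2,1)] YXv[OF assms(3,1)] by auto
qed

end

lemma all_less6: "(\<forall>i<(6::nat). P i) = (P 0 \<and> P 1 \<and> P 2 \<and> P 3 \<and> P 4 \<and> P 5)"
proof
  assume "\<forall>i<(6::nat). P i" thus "P 0 \<and> P 1 \<and> P 2 \<and> P 3 \<and> P 4 \<and> P 5" by simp
next
  assume h: "P 0 \<and> P 1 \<and> P 2 \<and> P 3 \<and> P 4 \<and> P 5"
  show "\<forall>i<(6::nat). P i"
  proof (intro allI impI)
    fix i :: nat assume "i < 6"
    hence "i = 0 \<or> i = 1 \<or> i = 2 \<or> i = 3 \<or> i = 4 \<or> i = 5" by arith
    thus "P i" using h by auto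
  qed
qed

lemma hole6I:
  fixes \<rho> :: "'a \<Rightarrow> 'a \<Rightarrow> int"
  assumes d: "distinct [h0,h1,h2,h3,h4,h5]" and s: "set [h0,h1,h2,h3,h4,h5] \<subseteq> V"
    and sA: "\<And>u v. u \<in> V \<Longrightarrow> v \<in> V \<Longrightarrow> adj \<rho> u v \<Longrightarrow> adj \<rho> v u"
    and sB: "\<And>u v. u \<in> V \<Longrightarrow> v \<in> V \<Longrightarrow> antiadj \<rho> u v \<Longrightarrow> antiadj \<rho> v u"
    and a: "adj \<rho> h0 h1" "adj \<rho> h1 h2" "adj \<rho> h2 h3" "adj \<rho> h3 h4" "adj \<rho> h4 h5" "adj \<rho> h5 h0"
    and b: "antiadj \<rho> h0 h2" "antiadj \<rho> h0 h3" "antiadj \<rho> h0 h4" "antiadj \<rho> h1 h3" "antiadj \<rho> h1 h4"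
      "antiadj \<rho> h1 h5" "antiadj \<rho> h2 h4" "antiadj \<rho> h2 h5" "antiadj \<rho> h3 h5"
  shows "is_hole V \<rho> [h0,h1,h2,h3,h4,h5]"
proof -
  have len: "length [h0,h1,h2,h3,h4,h5] = 6" by simp
  have m: "h0 \<in> V" "h1 \<in> V" "h2 \<in> V" "h3 \<in> V" "h4 \<in> V" "h5 \<in> V" using s by auto
  show ?thesis
  unfolding is_hole_def len all_less6
  using d s a b sA[OF m(1) m(2) a(1)] sA[OF m(2) m(3) a(2)] sA[OF m(3) m(4) a(3)] sA[OF m(4) m(5) a(4)] sA[OF m(5) m(6) a(5)] sA[OF m(6) m(1) a(6)]
    sB[OF m(1) m(3) b(1)] sB[OF m(1) m(4) b(2)] sB[OF m(1) m(5) b(3)] sB[OF m(2) m(4) b(4)] sB[OF m(2) m(5) b(5)] sB[OF m(2) m(6) b(6)] sB[OF m(3) m(5) b(7)] sB[OF m(3) m(6) b(8)] sB[OF m(4) m(6) b(9)]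
  by simp
qed

lemma rel_closed:
  assumes "(p, z) \<in> R\<^sup>*" "\<And>a b. a \<in> S \<Longrightarrow> (a, b) \<in> R \<Longrightarrow> b \<in> S" "p \<in> S"
  shows "z \<in> S"
  using assms(1) by (induction rule: rtrancl_induct) (use assms in auto)

lemma swD_iff:
  assumes tg: "trigraph V \<theta>"
  shows "u \<in> sw_D V \<theta> \<longleftrightarrow> u \<in> V \<and> (\<exists>w\<in>V. w \<noteq> u \<and> \<theta> u w = 0)"
proof
  assume "u \<in> sw_D V \<theta>"
  then obtain C where "C \<in> sw_components V \<theta>" "u \<in> C" unfolding sw_D_def by blast
  then obtain v where v: "v \<in> V" and uC: "u \<in> {z. (v, z) \<in> (sw_rel V \<theta>)\<^sup>*}"
    and cd: "card {z. (v, z) \<in> (sw_rel V \<theta>)\<^sup>*} \<ge> 2"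
    unfolding sw_components_def by blast
  let ?C = "{z. (v, z) \<in> (sw_rel V \<theta>)\<^sup>*}"
  show "u \<in> V \<and> (\<exists>w\<in>V. w \<noteq> u \<and> \<theta> u w = 0)"
  proof (cases "u = v")
    case True
    have "\<exists>z\<in>?C. z \<noteq> v"
    proof (rule ccontr)
      assume "\<not> ?thesis"
      hence "?C \<subseteq> {v}" by blast
      hence "card ?C \<le> 1" using card_mono[of "{v}" ?C] by simp
      thus False using cd by simp
    qed
    then obtain z where z: "(v, z) \<in> (sw_rel V \<theta>)\<^sup>*" "z \<noteq> v" by blast
    obtain z1 where "(v, z1) \<in> sw_rel V \<theta>"
      using converse_rtranclE[OF z(1)] z(2) by metis
    thus ?thesis using True v unfolding sw_rel_def by auto
  next
    case False
    from uC have vu: "(v, u) \<in> (sw_rel V \<theta>)\<^sup>*" by simp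
    obtain z where "(z, u) \<in> sw_rel V \<theta>" using rtranclE[OF vu] False by metis
    hence zz: "z \<in> V" "u \<in> V" "z \<noteq> u" "\<theta> z u = 0" unfolding sw_rel_def by auto
    have S: "\<forall>u\<in>V. \<forall>v\<in>V. u \<noteq> v \<longrightarrow> \<theta> u v = \<theta> v u \<and> \<theta> u v \<in> {-1,0,1}"
      using tg unfolding trigraph_def by simp
    have "\<theta> u z = \<theta> z u" using bspec[OF bspec[OF S zz(2)] zz(1)] zz(3) by simp
    thus ?thesis using zz by auto
  qed
next
  assume "u \<in> V \<and> (\<exists>w\<in>V. w \<noteq> u \<and> \<theta> u w = 0)"
  then obtain w where u: "u \<in> V" and w: "w \<in> V" "w \<noteq> u" "\<theta> u w = 0" by blast
  let ?C = "{z. (u, z) \<in> (sw_rel V \<theta>)\<^sup>*}"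
  have sub: "?C \<subseteq> V"
  proof
    fix z assume "z \<in> ?C"
    hence "(u, z) \<in> (sw_rel V \<theta>)\<^sup>*" by simp
    thus "z \<in> V" by (rule rel_closed) (use u in \<open>auto simp: sw_rel_def\<close>)
  qed
  have fin: "finite ?C" using sub tg finite_subset unfolding trigraph_def by blast
  have "(u, w) \<in> sw_rel V \<theta>" using u w unfolding sw_rel_def by simp
  hence "{u, w} \<subseteq> ?C" by auto
  hence "card {u, w} \<le> card ?C" using card_mono fin by blast
  hence "card ?C \<ge> 2" using w by simp
  hence "?C \<in> sw_components V \<theta>" unfolding sw_components_def using u by blast
  thus "u \<in> sw_D V \<theta>" unfolding sw_D_def using u by blast
qed

context dg begin

lemma nadj: "u \<in> V \<Longrightarrow> v \<in> V \<Longrightarrow> u \<noteq> v \<Longrightarrow> \<not> adj \<theta> u v \<Longrightarrow> \<theta> u v = -1"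
  using vals[of u v] unfolding adj_def by auto
lemma nanti: "u \<in> V \<Longrightarrow> v \<in> V \<Longrightarrow> u \<noteq> v \<Longrightarrow> \<not> antiadj \<theta> u v \<Longrightarrow> \<theta> u v = 1"
  using vals[of u v] unfolding antiadj_def by auto

lemma sw_nb_uniq:
  assumes "p \<in> V" "w \<in> V" "w' \<in> V" "w \<noteq> p" "w' \<noteq> p" "\<theta> p w = 0" "\<theta> p w' = 0"
  shows "w = w'"
proof (cases "p \<in> X")
  case True
  have "w \<in> X" using assms(2,6) XY0[OF True] XY by blast
  moreover have "w' \<in> X" using assms(3,7) XY0[OF True] XY by blast
  ultimately show ?thesis using XA[OF True] assms unfolding adj_def by auto
next
  case False
  hence pY: "p \<in> Y" using assms(1) XY by blast
  have "w \<in> Y" using assms(2,6) YX0[OF _ pY] XY by blast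
  moreover have "w' \<in> Y" using assms(3,7) YX0[OF _ pY] XY by blast
  ultimately show ?thesis using YA[OF pY] assms unfolding antiadj_def by auto
qed

lemma sw_comp:
  assumes "p \<in> V" "q \<in> V" "p \<noteq> q" "\<theta> p q = 0"
  shows "{z. (p, z) \<in> (sw_rel V \<theta>)\<^sup>*} = {p, q}"
proof
  have qp: "\<theta> q p = 0" using sym assms by metis
  show "{z. (p, z) \<in> (sw_rel V \<theta>)\<^sup>*} \<subseteq> {p, q}"
  proof
    fix z assume "z \<in> {z. (p, z) \<in> (sw_rel V \<theta>)\<^sup>*}"
    hence pz: "(p, z) \<in> (sw_rel V \<theta>)\<^sup>*" by simp
    show "z \<in> {p, q}"
    proof (rule rel_closed[OF pz])
      fix a b assume a: "a \<in> {p, q}" and ab: "(a, b) \<in> sw_rel V \<theta>"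
      hence b: "b \<in> V" "b \<noteq> a" "\<theta> a b = 0" "a \<in> V" unfolding sw_rel_def by auto
      show "b \<in> {p, q}"
      proof (cases "a = p")
        case True thus ?thesis using sw_nb_uniq[of p b q] b assms by auto
      next
        case False hence "a = q" using a by auto
        thus ?thesis using sw_nb_uniq[of q b p] b assms qp by auto
      qed
    qed simp
  qed
  have "(p, q) \<in> sw_rel V \<theta>" using assms unfolding sw_rel_def by auto
  thus "{p, q} \<subseteq> {z. (p, z) \<in> (sw_rel V \<theta>)\<^sup>*}" by auto
qed

lemma sw_comp_in:
  assumes "p \<in> V" "q \<in> V" "p \<noteq> q" "\<theta> p q = 0"
  shows "{p, q} \<in> sw_components V \<theta>"
proof -
  have "card {p, q} = 2" using assms(3) by simp
  thus ?thesis unfolding sw_components_def using sw_comp[OF assms] assms(1)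
    by (intro CollectI bexI[of _ p]) auto
qed

lemma sw_uniq:
  assumes cF: "class_F V \<theta>"
    and a: "p \<in> V" "q \<in> V" "p \<noteq> q" "\<theta> p q = 0"
    and b: "p' \<in> V" "q' \<in> V" "p' \<noteq> q'" "\<theta> p' q' = 0"
  shows "{p, q} = {p', q'}"
proof -
  note H = conjunct1[OF conjunct2[OF cF[unfolded class_F_def]]]
  show ?thesis using bspec[OF bspec[OF H sw_comp_in[OF a]] sw_comp_in[OF b]] .
qed

lemma sw_small:
  assumes cF: "class_F V \<theta>"
    and a: "p \<in> V" "q \<in> V" "p \<noteq> q" "\<theta> p q = 0"
  shows "nbhd V \<theta> p \<inter> nbhd V \<theta> q = {}"
proof -
  have qp: "\<theta> q p = 0" using sym a by metis
  have e: "sw_edges V \<theta> {p, q} = {{p, q}}"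
    unfolding sw_edges_def sw_rel_def using a qp by auto
  note H = conjunct2[OF conjunct2[OF cF[unfolded class_F_def]]]
  have "\<forall>x y. sw_edges V \<theta> {p, q} = {{x, y}} \<longrightarrow> nbhd V \<theta> x \<inter> nbhd V \<theta> y = {}"
    using conjunct1[OF conjunct2[OF bspec[OF H sw_comp_in[OF a]]]] .
  thus ?thesis using e by blast
qed

lemma swD_pair:
  assumes cF: "class_F V \<theta>"
    and a: "p \<in> V" "q \<in> V" "p \<noteq> q" "\<theta> p q = 0"
  shows "sw_D V \<theta> = {p, q}"
proof
  show "sw_D V \<theta> \<subseteq> {p, q}"
  proof
    fix u assume "u \<in> sw_D V \<theta>"
    then obtain w where "u \<in> V" "w \<in> V" "w \<noteq> u" "\<theta> u w = 0" using swD_iff[OF tg] by blast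
    thus "u \<in> {p, q}" using sw_uniq[OF cF a, of u w] by auto
  qed
  have qp: "\<theta> q p = 0" using sym a by metis
  have "\<exists>w\<in>V. w \<noteq> p \<and> \<theta> p w = 0" using a by (intro bexI[of _ q]) auto
  hence P: "p \<in> sw_D V \<theta>" using swD_iff[OF tg, of p] a by blast
  have "\<exists>w\<in>V. w \<noteq> q \<and> \<theta> q w = 0" using a qp by (intro bexI[of _ p]) auto
  hence Q: "q \<in> sw_D V \<theta>" using swD_iff[OF tg, of q] a by blast
  show "{p, q} \<subseteq> sw_D V \<theta>" using P Q by blast
qed

lemma C6core:
  assumes a: "a \<in> X" "b \<in> X" "adj \<theta> a b"
    and y: "y1 \<in> Y" "y1' \<in> Y" "y2 \<in> Y" "y2' \<in> Y" "antiadj \<theta> y1 y1'" "antiadj \<theta> y2 y2'"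
    and d: "y2 \<noteq> y1" "y2 \<noteq> y1'" "y2' \<noteq> y1" "y2' \<noteq> y1'"
    and o: "\<theta> a y1 = 1" "\<theta> a y2 = 1"
  shows "is_antihole V \<theta> [a, y1', y1, b, y2, y2']"
proof -
  have V: "a \<in> V" "b \<in> V" "y1 \<in> V" "y1' \<in> V" "y2 \<in> V" "y2' \<in> V" using a y XY by auto
  have ab: "a \<noteq> b" using a(3) unfolding adj_def by auto
  have yy: "y1 \<noteq> y1'" "y2 \<noteq> y2'" using y(5,6) unfolding antiadj_def by auto
  have neqs0: "a \<noteq> y1" "a \<noteq> y2" "b \<noteq> y1" "b \<noteq> y2" using a y XnY by auto
  have o1: "\<theta> a y1' = -1" using XYP[OF a(1) y(1,2,5)] o by auto
  have o2: "\<theta> a y2' = -1" using XYP[OF a(1) y(3,4,6)] o by auto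
  have y'0: "antiadj \<theta> y1' y1" "antiadj \<theta> y2' y2" using y anti_sym V by blast+
  have s1: "\<theta> y1 a = 1" using sym[of a y1] V neqs0 o by simp
  have s2: "\<theta> y2 a = 1" using sym[of a y2] V neqs0 o by simp
  have t1: "\<theta> y1 b = -1" using YXP[OF y(1) a] s1 by auto
  have t2: "\<theta> y2 b = -1" using YXP[OF y(3) a] s2 by auto
  have b1: "\<theta> b y1 = -1" using sym[of b y1] V neqs0 t1 by simp
  have b2: "\<theta> b y2 = -1" using sym[of b y2] V neqs0 t2 by simp
  have b1': "\<theta> b y1' = 1" using XYP[OF a(2) y(1,2,5)] b1 by auto
  have b2': "\<theta> b y2' = 1" using XYP[OF a(2) y(3,4,6)] b2 by auto
  have c1: "\<not> antiadj \<theta> y1' y2"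
  proof assume "antiadj \<theta> y1' y2" thus False using YA[OF y(2) y(3) y(1) _ y'0(1)] d by auto qed
  have c2: "\<not> antiadj \<theta> y1' y2'"
  proof assume "antiadj \<theta> y1' y2'" thus False using YA[OF y(2) y(4) y(1) _ y'0(1)] d by auto qed
  have c3: "\<not> antiadj \<theta> y1 y2"
  proof assume "antiadj \<theta> y1 y2" thus False using YA[OF y(1) y(3) y(2) _ y(5)] d by auto qed
  have c4: "\<not> antiadj \<theta> y1 y2'"
  proof assume "antiadj \<theta> y1 y2'" thus False using YA[OF y(1) y(4) y(2) _ y(5)] d by auto qed
  have dis: "distinct [a, y1', y1, b, y2, y2']" using d yy ab a y XnY by auto
  have neqs: "a \<noteq> y1" "a \<noteq> y1'" "a \<noteq> y2" "a \<noteq> y2'" "b \<noteq> y1" "b \<noteq> y1'" "b \<noteq> y2" "b \<noteq> y2'"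
    using a y XnY by auto
  have ab0: "\<theta> a b \<noteq> -1" using a(3) unfolding adj_def by auto
  let ?r = "\<lambda>u v. - \<theta> u v"
  show ?thesis unfolding is_antihole_def
  proof (rule hole6I)
    show "distinct [a, y1', y1, b, y2, y2']" by (rule dis)
    show "set [a, y1', y1, b, y2, y2'] \<subseteq> V" using V by auto
    show "\<And>u v. u \<in> V \<Longrightarrow> v \<in> V \<Longrightarrow> adj ?r u v \<Longrightarrow> adj ?r v u"
    proof -
      fix u v assume uv: "u \<in> V" "v \<in> V" "adj ?r u v"
      hence "u \<noteq> v" unfolding adj_def by simp
      hence "\<theta> v u = \<theta> u v" using sym[of v u] uv by simp
      thus "adj ?r v u" using uv unfolding adj_def by auto
    qed
    show "\<And>u v. u \<in> V \<Longrightarrow> v \<in> V \<Longrightarrow> antiadj ?r u v \<Longrightarrow> antiadj ?r v u"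
    proof -
      fix u v assume uv: "u \<in> V" "v \<in> V" "antiadj ?r u v"
      hence "u \<noteq> v" unfolding antiadj_def by simp
      hence "\<theta> v u = \<theta> u v" using sym[of v u] uv by simp
      thus "antiadj ?r v u" using uv unfolding antiadj_def by auto
    qed
    have adjI: "\<And>u v. u \<noteq> v \<Longrightarrow> antiadj \<theta> u v \<Longrightarrow> adj ?r u v" unfolding adj_def antiadj_def by auto
    have antI: "\<And>u v. u \<noteq> v \<Longrightarrow> \<theta> u v = 1 \<Longrightarrow> antiadj ?r u v" unfolding antiadj_def by auto
    have m1: "\<And>u v. u \<noteq> v \<Longrightarrow> \<theta> u v = -1 \<Longrightarrow> antiadj \<theta> u v" unfolding antiadj_def by auto
    show "adj ?r a y1'" by (rule adjI[OF neqs(2) m1[OF neqs(2) o1]])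
    show "adj ?r y1' y1" by (rule adjI[OF yy(1)[symmetric] y'0(1)])
    show "adj ?r y1 b" using adjI[OF neqs(5)[symmetric] m1[OF neqs(5)[symmetric] t1]] .
    show "adj ?r b y2" by (rule adjI[OF neqs(7) m1[OF neqs(7) b2]])
    show "adj ?r y2 y2'" by (rule adjI[OF yy(2) y(6)])
    have "\<theta> y2' a = -1" using sym[of y2' a] V neqs o2 by simp
    thus "adj ?r y2' a" using adjI[OF neqs(4)[symmetric] m1[OF neqs(4)[symmetric]]] by simp
    show "antiadj ?r a y1" by (rule antI[OF neqs(1) o(1)])
    show "antiadj ?r a b" using a(3) ab unfolding adj_def antiadj_def by auto
    show "antiadj ?r a y2" by (rule antI[OF neqs(3) o(2)])
    have "\<theta> y1' b = 1" using sym[of y1' b] V neqs b1' by simp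
    thus "antiadj ?r y1' b" using antI[OF neqs(6)[symmetric]] by simp
    show "antiadj ?r y1' y2" by (rule antI[OF d(2)[symmetric] nanti[OF V(4) V(5) d(2)[symmetric] c1]])
    show "antiadj ?r y1' y2'" by (rule antI[OF d(4)[symmetric] nanti[OF V(4) V(6) d(4)[symmetric] c2]])
    show "antiadj ?r y1 y2" by (rule antI[OF d(1)[symmetric] nanti[OF V(3) V(5) d(1)[symmetric] c3]])
    show "antiadj ?r y1 y2'" by (rule antI[OF d(3)[symmetric] nanti[OF V(3) V(6) d(3)[symmetric] c4]])
    show "antiadj ?r b y2'" by (rule antI[OF neqs(8) b2'])
  qed
qed

lemma C6:
  assumes a: "a \<in> X" "b \<in> X" "adj \<theta> a b"
    and y: "y1 \<in> Y" "y1' \<in> Y" "y2 \<in> Y" "y2' \<in> Y" "antiadj \<theta> y1 y1'" "antiadj \<theta> y2 y2'"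
    and d: "y2 \<noteq> y1" "y2 \<noteq> y1'" "y2' \<noteq> y1" "y2' \<noteq> y1'"
  shows "\<exists>hs. is_antihole V \<theta> hs \<and> length hs = 6"
proof -
  have y': "antiadj \<theta> y1' y1" "antiadj \<theta> y2' y2"
    using y(5,6) anti_sym[OF YV[OF y(1)] YV[OF y(2)]] anti_sym[OF YV[OF y(3)] YV[OF y(4)]] by simp_all
  have A: "\<theta> a y1 = 1 \<or> \<theta> a y1' = 1" using XYP[OF a(1) y(1,2,5)] by auto
  have B: "\<theta> a y2 = 1 \<or> \<theta> a y2' = 1" using XYP[OF a(1) y(3,4,6)] by auto
  from A B show ?thesis
  proof (elim disjE)
    assume "\<theta> a y1 = 1" "\<theta> a y2 = 1"
    thus ?thesis using C6core[OF a y(1,2,3,4,5,6) d] by (intro exI[of _ "[a, y1', y1, b, y2, y2']"] conjI) simp_all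
  next
    assume "\<theta> a y1 = 1" "\<theta> a y2' = 1"
    thus ?thesis using C6core[OF a y(1,2,4,3,5) y'(2) d(3,4,1,2)] by (intro exI[of _ "[a, y1', y1, b, y2', y2]"] conjI) simp_all
  next
    assume "\<theta> a y1' = 1" "\<theta> a y2 = 1"
    thus ?thesis using C6core[OF a y(2,1,3,4) y'(1) y(6) d(2,1,4,3)] by (intro exI[of _ "[a, y1, y1', b, y2, y2']"] conjI) simp_all
  next
    assume "\<theta> a y1' = 1" "\<theta> a y2' = 1"
    thus ?thesis using C6core[OF a y(2,1,4,3) y'(1,2) d(4,3,2,1)] by (intro exI[of _ "[a, y1, y1', b, y2', y2]"] conjI) simp_all
  qed
qed

end

lemma S2_empty:
  assumes "\<And>w z. w \<in> V \<Longrightarrow> z \<in> V \<Longrightarrow> adj \<theta> u w \<Longrightarrow> \<theta> w v \<noteq> 1 \<Longrightarrow> adj \<theta> w z \<Longrightarrow>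
      z \<noteq> u \<Longrightarrow> z \<noteq> v \<Longrightarrow> \<theta> z u \<noteq> 1 \<Longrightarrow> False"
  shows "S2 V \<theta> u v = {}"
  using assms unfolding S2_def S1_def by blast

lemma S2_sub:
  assumes "\<And>w z. w \<in> V \<Longrightarrow> z \<in> V \<Longrightarrow> adj \<theta> u w \<Longrightarrow> \<theta> w v \<noteq> 1 \<Longrightarrow> adj \<theta> w z \<Longrightarrow>
      z \<noteq> u \<Longrightarrow> z \<noteq> v \<Longrightarrow> \<theta> z u \<noteq> 1 \<Longrightarrow> z = c"
  shows "S2 V \<theta> u v \<subseteq> {c}"
  using assms unfolding S2_def S1_def by blast

lemma GpE: "u \<in> V \<Longrightarrow> v \<in> V \<Longrightarrow> u \<noteq> v \<Longrightarrow> \<theta> u v = -1 \<Longrightarrow> S2 V \<theta> u v = {} \<Longrightarrow> Gp V \<theta> u v"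
  unfolding Gp_def by blast
lemma GpC: "u \<in> V \<Longrightarrow> v \<in> V \<Longrightarrow> u \<noteq> v \<Longrightarrow> \<theta> u v = -1 \<Longrightarrow> S2 V \<theta> u v \<subseteq> {c} \<Longrightarrow> S2 V \<theta> v u \<subseteq> {c} \<Longrightarrow> Gp V \<theta> u v"
  unfolding Gp_def by blast

context dg begin

lemma inXY: "w \<in> V \<Longrightarrow> w \<in> X \<or> w \<in> Y" using XY by blast
lemma XYa: "x \<in> X \<Longrightarrow> y \<in> Y \<Longrightarrow> adj \<theta> x y \<Longrightarrow> \<theta> x y = 1"
  using XYv[of x y] unfolding adj_def by auto
lemma YXa: "x \<in> X \<Longrightarrow> y \<in> Y \<Longrightarrow> adj \<theta> y x \<Longrightarrow> \<theta> y x = 1"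
  using YXv[of x y] unfolding adj_def by auto
lemma symv: "u \<in> V \<Longrightarrow> v \<in> V \<Longrightarrow> \<theta> u v = c \<Longrightarrow> c \<noteq> 0 \<or> u \<noteq> v \<Longrightarrow> u \<noteq> v \<Longrightarrow> \<theta> v u = c"
  using sym by metis
lemma symX: "u \<in> V \<Longrightarrow> v \<in> V \<Longrightarrow> u \<noteq> v \<Longrightarrow> \<theta> v u = \<theta> u v"
  using sym by metis
lemma adjne: "adj \<theta> u v \<Longrightarrow> u \<noteq> v" unfolding adj_def by simp
lemma antine: "antiadj \<theta> u v \<Longrightarrow> u \<noteq> v" unfolding antiadj_def by simp
lemma m1_nadj: "\<theta> u v = -1 \<Longrightarrow> \<not> adj \<theta> u v" unfolding adj_def by simp
lemma one_nanti: "\<theta> u v = 1 \<Longrightarrow> \<not> antiadj \<theta> u v" unfolding antiadj_def by simp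
lemma ne1_anti: "u \<in> V \<Longrightarrow> v \<in> V \<Longrightarrow> u \<noteq> v \<Longrightarrow> \<theta> u v \<noteq> 1 \<Longrightarrow> antiadj \<theta> u v"
  using anti_iff by blast

lemma L_I:
  assumes x: "x \<in> X" and s: "s \<in> Y" and sing: "\<forall>w\<in>Y. w \<noteq> s \<longrightarrow> \<theta> w s = 1" and xs: "\<theta> x s = -1"
  shows "Gp V \<theta> x s"
proof (rule GpE)
  show xV: "x \<in> V" "s \<in> V" "x \<noteq> s" "\<theta> x s = -1" using x s xs XV YV XnY by auto
  show "S2 V \<theta> x s = {}"
  proof (rule S2_empty)
    fix w z assume w: "w \<in> V" "adj \<theta> x w" "\<theta> w s \<noteq> 1"
    show False
    proof (cases "w \<in> X")
      case True
      have "\<theta> s x = -1" using symX[of x s] xV xs by simp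
      hence "\<theta> s w = 1" using YXP[OF s x True w(2)] by auto
      thus False using symX[of s w] w True s XnY YV by auto
    next
      case False
      hence wY: "w \<in> Y" using inXY w(1) by blast
      have "w \<noteq> s" using w(2) xs m1_nadj by blast
      thus False using sing wY w(3) by blast
    qed
  qed
qed

lemma L_II:
  assumes y: "y \<in> Y" "y' \<in> Y" "\<theta> y y' = -1" and yy: "y \<noteq> y'" and noX: "\<forall>a\<in>X. \<forall>b\<in>X. \<not> adj \<theta> a b"
  shows "Gp V \<theta> y y'"
proof (rule GpE)
  show V: "y \<in> V" "y' \<in> V" "y \<noteq> y'" "\<theta> y y' = -1" using y yy YV by auto
  have ayy: "antiadj \<theta> y y'" using y(3) yy unfolding antiadj_def by simp
  show "S2 V \<theta> y y' = {}"
  proof (rule S2_empty)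
    fix w z assume w: "w \<in> V" "z \<in> V" "adj \<theta> y w" "\<theta> w y' \<noteq> 1" "adj \<theta> w z" "z \<noteq> y" "z \<noteq> y'" "\<theta> z y \<noteq> 1"
    show False
    proof (cases "w \<in> Y")
      case True
      have wy': "w \<noteq> y'" using w(3) y(3) m1_nadj by blast
      have "antiadj \<theta> y' w" using ne1_anti[of w y'] w(1,4) wy' V anti_sym by blast
      hence "w = y" using YA[OF y(2) True y(1) _ ] anti_sym[of y y'] ayy V by blast
      thus False using w(3) adjne by blast
    next
      case False
      hence wX: "w \<in> X" using inXY w(1) by blast
      show False
      proof (cases "z \<in> X")
        case True thus False using noX wX w(5) by blast
      next
        case False
        hence zY: "z \<in> Y" using inXY w(2) by blast
        have "\<theta> y z \<noteq> 1" using symX[of z y] w(2,6,8) V by simp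
        hence "antiadj \<theta> y z" using ne1_anti[of y z] w(2,6) V by auto
        thus False using YA[OF y(1) zY y(2) _ ayy] w(7) by blast
      qed
    qed
  qed
qed

lemma L_XX:
  assumes u: "u \<in> X" "v \<in> X" "u \<noteq> v" "\<theta> u v = -1"
    and c1: "\<forall>w\<in>Y. adj \<theta> u w \<longrightarrow> \<theta> w v = 1"
    and c2: "\<forall>u'\<in>X. adj \<theta> u u' \<longrightarrow> (\<forall>z\<in>Y. adj \<theta> u' z \<longrightarrow> \<theta> z u = 1)"
  shows "Gp V \<theta> u v"
proof (rule GpE)
  show V: "u \<in> V" "v \<in> V" "u \<noteq> v" "\<theta> u v = -1" using u XV by auto
  show "S2 V \<theta> u v = {}"
  proof (rule S2_empty)
    fix w z assume w: "w \<in> V" "z \<in> V" "adj \<theta> u w" "\<theta> w v \<noteq> 1" "adj \<theta> w z" "z \<noteq> u" "z \<noteq> v" "\<theta> z u \<noteq> 1"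
    have wX: "w \<in> X" using c1 w(1,3,4) inXY by blast
    show False
    proof (cases "z \<in> X")
      case True
      have "adj \<theta> w u" using adj_sym[of u w] w(1,3) V by simp
      thus False using XA[OF wX _ True] u(1) w(5,6) by blast
    next
      case False
      hence "z \<in> Y" using inXY w(2) by blast
      thus False using c2 wX w(3,5,8) by blast
    qed
  qed
qed

lemma L_SS1:
  assumes u: "u \<in> X" "v \<in> X" "u \<noteq> v" "\<not> adj \<theta> u v"
    and y: "y \<in> Y" "y' \<in> Y" "antiadj \<theta> y y'" "\<theta> u y = 1" "\<theta> v y = 1"
    and oth: "\<forall>w\<in>Y. w \<noteq> y \<longrightarrow> w \<noteq> y' \<longrightarrow> \<theta> w u = 1 \<and> \<theta> w v = 1"
  shows "S2 V \<theta> u v \<subseteq> {y'}"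
proof (rule S2_sub)
  have V: "u \<in> V" "v \<in> V" "y \<in> V" "y' \<in> V" using u y XV YV by auto
  fix w z assume w: "w \<in> V" "z \<in> V" "adj \<theta> u w" "\<theta> w v \<noteq> 1" "adj \<theta> w z" "z \<noteq> u" "z \<noteq> v" "\<theta> z u \<noteq> 1"
  have uy': "\<theta> u y' = -1" using XYP[OF u(1) y(1,2,3)] y(4) by auto
  have wX: "w \<in> X"
  proof (rule ccontr)
    assume "w \<notin> X" hence wY: "w \<in> Y" using inXY w(1) by blast
    show False
    proof (cases "w = y")
      case True
      have "\<theta> y v = 1" using symX[of v y] V u y XnY by auto
      thus False using True w(4) by simp
    next
      case False
      show False
      proof (cases "w = y'")
        case True thus False using uy' w(3) m1_nadj by blast
      next
        case False2: False
        thus False using oth wY False w(4) by blast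
      qed
    qed
  qed
  show "z = y'"
  proof (cases "z \<in> X")
    case True
    have "adj \<theta> w u" using adj_sym[of u w] w(1,3) V by simp
    thus ?thesis using XA[OF wX _ True] u(1) w(5,6) by blast
  next
    case False
    hence zY: "z \<in> Y" using inXY w(2) by blast
    show ?thesis
    proof (rule ccontr)
      assume zy': "z \<noteq> y'"
      show False
      proof (cases "z = y")
        case True
        have "\<theta> y u = 1" using symX[of u y] V u y XnY by auto
        thus False using True w(8) by simp
      next
        case False thus False using oth zY zy' w(8) by blast
      qed
    qed
  qed
qed

lemma L_SS:
  assumes u: "u \<in> X" "v \<in> X" "u \<noteq> v" "\<not> adj \<theta> u v"
    and y: "y \<in> Y" "y' \<in> Y" "antiadj \<theta> y y'" "\<theta> u y = 1" "\<theta> v y = 1"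
    and oth: "\<forall>w\<in>Y. w \<noteq> y \<longrightarrow> w \<noteq> y' \<longrightarrow> \<theta> w u = 1 \<and> \<theta> w v = 1"
  shows "Gp V \<theta> u v"
proof (rule GpC)
  show V: "u \<in> V" "v \<in> V" "u \<noteq> v" using u XV by auto
  show "\<theta> u v = -1" using nadj V u(4) by blast
  have vu: "\<not> adj \<theta> v u" using adj_sym V u(4) by blast
  show "S2 V \<theta> u v \<subseteq> {y'}" by (rule L_SS1[OF u y oth])
  show "S2 V \<theta> v u \<subseteq> {y'}" by (rule L_SS1[OF u(2,1) u(3)[symmetric] vu y(1,2,3,5,4)]) (use oth in blast)
qed


lemma L_P4:
  assumes a: "a \<in> X" "b \<in> X" "adj \<theta> a b" and Xe: "X = {a, b}"
    and y: "y \<in> Y" "y' \<in> Y" "antiadj \<theta> y y'" and Ye: "Y = {y, y'}" and ay: "\<theta> a y = 1"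
  shows "Gp V \<theta> a y'"
proof (rule GpE)
  have ay': "\<theta> a y' = -1" using XYP[OF a(1) y(1,2,3)] ay by auto
  show V: "a \<in> V" "y' \<in> V" "a \<noteq> y'" "\<theta> a y' = -1" using a y XV YV XnY ay' by auto
  have yV: "y \<in> V" "b \<in> V" using y a XV YV by auto
  have ya: "\<theta> y a = 1" using symX[of a y] V yV ay a y XnY by auto
  have yb: "\<theta> y b = -1" using YXP[OF y(1) a] ya by auto
  have by': "\<theta> b y' = 1"
  proof -
    have "\<theta> b y = -1" using symX[of y b] yV yb a y XnY by auto
    thus ?thesis using XYP[OF a(2) y(1,2,3)] by auto
  qed
  show "S2 V \<theta> a y' = {}"
  proof (rule S2_empty)
    fix w z assume w: "w \<in> V" "z \<in> V" "adj \<theta> a w" "\<theta> w y' \<noteq> 1" "adj \<theta> w z" "z \<noteq> a" "z \<noteq> y'" "\<theta> z a \<noteq> 1"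
    have wy: "w = y"
    proof -
      have "w \<noteq> a" using w(3) adjne by blast
      moreover have "w \<noteq> b" using w(4) by' by blast
      moreover have "w \<noteq> y'" using w(3) ay' m1_nadj by blast
      ultimately show ?thesis using w(1) XY Xe Ye by blast
    qed
    have "z \<noteq> y" using w(5) wy adjne by blast
    moreover have "z \<noteq> b" using w(5) wy yb m1_nadj by blast
    ultimately show False using w(2,6,7) XY Xe Ye by blast
  qed
qed

lemma L_4a2:
  assumes noX: "\<forall>p\<in>X. \<forall>q\<in>X. \<not> adj \<theta> p q"
    and y: "y \<in> Y" "y' \<in> Y" "antiadj \<theta> y y'"
    and oth: "\<forall>t\<in>Y. t \<noteq> y \<longrightarrow> t \<noteq> y' \<longrightarrow> (\<forall>w\<in>Y. w \<noteq> t \<longrightarrow> \<theta> w t = 1) \<and> (\<forall>x\<in>X. \<theta> t x = 1)"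
    and x: "x \<in> X" "\<theta> x y' = -1" and nos: "\<forall>x2\<in>X. x2 \<noteq> x \<longrightarrow> \<theta> x2 y \<noteq> 1"
  shows "Gp V \<theta> x y'"
proof (rule GpE)
  show V: "x \<in> V" "y' \<in> V" "x \<noteq> y'" "\<theta> x y' = -1" using x y XV YV XnY by auto
  show "S2 V \<theta> x y' = {}"
  proof (rule S2_empty)
    fix w z assume w: "w \<in> V" "z \<in> V" "adj \<theta> x w" "\<theta> w y' \<noteq> 1" "adj \<theta> w z" "z \<noteq> x" "z \<noteq> y'" "\<theta> z x \<noteq> 1"
    have wY: "w \<in> Y" using noX x(1) w(1,3) inXY by blast
    have wy: "w = y"
    proof (rule ccontr)
      assume "w \<noteq> y"
      moreover have "w \<noteq> y'" using w(3) x(2) m1_nadj by blast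
      ultimately have "\<forall>w'\<in>Y. w' \<noteq> w \<longrightarrow> \<theta> w' w = 1" using oth wY by blast
      hence "\<theta> y' w = 1" using y(2) \<open>w \<noteq> y'\<close> by auto
      hence "\<theta> w y' = 1" using symX[of y' w] w(1) V \<open>w \<noteq> y'\<close> by simp
      thus False using w(4) by simp
    qed
    show False
    proof (cases "z \<in> X")
      case True
      have "\<theta> z y = 1" using YXa[OF True y(1)] w(5) wy adj_sym[of y z] w(2) YV[OF y(1)] symX[of y z]
        by (metis XnY True y(1))
      thus False using nos True w(6) by blast
    next
      case False
      hence zY: "z \<in> Y" using inXY w(2) by blast
      have "z \<noteq> y" using w(5) wy adjne by blast
      thus False using oth zY w(7,8) x(1) by blast
    qed
  qed
qed


lemma L_sz:
  assumes a: "a \<in> X" "b \<in> X" "adj \<theta> a b"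
    and y: "y \<in> Y" "y' \<in> Y" "\<theta> y y' = -1" "y \<noteq> y'"
    and s: "s \<in> X" "s \<noteq> a" "s \<noteq> b" "\<theta> s y' = -1"
    and e: "e = a \<or> e = b" "\<theta> e y = 1"
    and oth: "\<forall>t\<in>Y. t \<noteq> y \<longrightarrow> t \<noteq> y' \<longrightarrow> (\<forall>w\<in>Y. w \<noteq> t \<longrightarrow> \<theta> w t = 1) \<and> (\<forall>x\<in>X. x \<noteq> a \<longrightarrow> x \<noteq> b \<longrightarrow> \<theta> t x = 1)"
    and nos: "\<forall>v\<in>X. v \<noteq> a \<longrightarrow> v \<noteq> b \<longrightarrow> v \<noteq> s \<longrightarrow> \<not> adj \<theta> s v \<longrightarrow> \<theta> v y \<noteq> 1"
    and uq: "\<forall>p\<in>V. \<forall>q\<in>V. p \<noteq> q \<longrightarrow> \<theta> p q = 0 \<longrightarrow> {p, q} = {a, b}"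
  shows "Gp V \<theta> s y'"
proof (rule GpC)
  show V: "s \<in> V" "y' \<in> V" "s \<noteq> y'" "\<theta> s y' = -1" using s y XV YV XnY by auto
  have yV: "y \<in> V" "a \<in> V" "b \<in> V" using y a XV YV by auto
  have ab: "a \<noteq> b" using a(3) adjne by blast
  have ba: "adj \<theta> b a" using a(3) adj_sym yV by blast
  have eX: "e \<in> X" using e a by blast
  have ye: "\<theta> y e = 1" using symX[of e y] e yV eX y XnY by auto
  obtain e' where e': "e' \<in> X" "adj \<theta> e e'" "{e, e'} = {a, b}" "e \<noteq> e'"
    using e a(3) ba ab a by blast
  have ye': "\<theta> y e' = -1" using YXP[OF y(1) eX e'(1,2)] ye by auto
  have e'V: "e' \<in> V" "e \<in> V" using e' eX XV by auto
  have e'y: "\<theta> e' y = -1" using symX[of y e'] ye' e'V yV y e' XnY by auto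
  have e'y': "\<theta> e' y' = 1" using XYP[OF e'(1) y(1,2)] e'y y unfolding antiadj_def by auto
  have ey': "\<theta> e y' = -1" using XYP[OF eX y(1,2)] e y unfolding antiadj_def by auto
  have ya: "\<theta> y' y = -1" using symX[of y y'] yV V y by auto
  have ys: "\<theta> y' s = -1" using symX[of s y'] V by auto
  have tY: "\<And>t. t \<in> Y \<Longrightarrow> t \<noteq> y \<Longrightarrow> t \<noteq> y' \<Longrightarrow> \<theta> t y' = 1 \<and> \<theta> t s = 1"
  proof -
    fix t assume t: "t \<in> Y" "t \<noteq> y" "t \<noteq> y'"
    hence "\<forall>w\<in>Y. w \<noteq> t \<longrightarrow> \<theta> w t = 1" using oth by blast
    hence "\<theta> y' t = 1" using y(2) t by auto
    hence "\<theta> t y' = 1" using symX[of y' t] t V YV by auto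
    moreover have "\<theta> t s = 1" using oth t s by blast
    ultimately show "\<theta> t y' = 1 \<and> \<theta> t s = 1" by simp
  qed
  have noab: "\<And>w. w \<in> X \<Longrightarrow> w \<noteq> a \<Longrightarrow> w \<noteq> b \<Longrightarrow> adj \<theta> w a \<Longrightarrow> False"
  proof -
    fix w assume h: "w \<in> X" "w \<noteq> a" "w \<noteq> b" "adj \<theta> w a"
    hence "adj \<theta> a w" using adj_sym[of w a] XV a(1) by simp
    thus False using XA[OF a(1) a(2) h(1) a(3)] h(3) by simp
  qed
  have noab': "\<And>w. w \<in> X \<Longrightarrow> w \<noteq> a \<Longrightarrow> w \<noteq> b \<Longrightarrow> adj \<theta> w b \<Longrightarrow> False"
  proof -
    fix w assume h: "w \<in> X" "w \<noteq> a" "w \<noteq> b" "adj \<theta> w b"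
    hence "adj \<theta> b w" using adj_sym[of w b] XV a(2) by simp
    thus False using XA[OF a(2) a(1) h(1) ba] h(2) by simp
  qed
  show "S2 V \<theta> s y' \<subseteq> {e}"
  proof (rule S2_sub)
    fix w z assume w: "w \<in> V" "z \<in> V" "adj \<theta> s w" "\<theta> w y' \<noteq> 1" "adj \<theta> w z" "z \<noteq> s" "z \<noteq> y'" "\<theta> z s \<noteq> 1"
    have wy: "w = y"
    proof (cases "w \<in> X")
      case True
      have "\<theta> y' w = 1" using YXP[OF y(2) s(1) True w(3)] ys by auto
      moreover have "w \<noteq> y'" using True y(2) XnY by blast
      ultimately have "\<theta> w y' = 1" using symX[of y' w] w(1) V by simp
      thus ?thesis using w(4) by simp
    next
      case False
      hence wY: "w \<in> Y" using inXY w(1) by blast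
      have "w \<noteq> y'" using w(3) s(4) m1_nadj by blast
      thus ?thesis using tY[OF wY] w(4) by blast
    qed
    show "z = e"
    proof (cases "z \<in> X")
      case False
      hence zY: "z \<in> Y" using inXY w(2) by blast
      have "z \<noteq> y" using w(5) wy adjne by blast
      thus ?thesis using tY[OF zY] w(7,8) by blast
    next
      case True
      have zy: "\<theta> y z = 1" using YXa[OF True y(1)] w(5) wy by simp
      show ?thesis
      proof (rule ccontr)
        assume ze: "z \<noteq> e"
        show False
        proof (cases "z = a \<or> z = b")
          case True
          hence "z = e'" using ze e'(3) by blast
          thus False using zy ye' by simp
        next
          case False
          have "z \<noteq> y" using True y(1) XnY by blast
          hence zy2: "\<theta> z y = 1" using symX[of y z] zy yV w(2) by simp
          show False
          proof (cases "adj \<theta> s z")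
            case False2: False
            thus False using nos True False w(6) zy2 by blast
          next
            case True2: True
            have "\<theta> s z \<noteq> -1" using True2 unfolding adj_def by auto
            moreover have "\<theta> s z \<noteq> 1" using symX[of z s] w(2,6,8) V by simp
            ultimately have "\<theta> s z = 0" using vals[of s z] V w(2,6) by auto
            hence "{s, z} = {a, b}" by (intro uq[rule_format]) (use V w(2,6) in auto)
            hence "s \<in> {a, b}" by (metis insertI1)
            thus False using s(2,3) by simp
          qed
        qed
      qed
    qed
  qed
  show "S2 V \<theta> y' s \<subseteq> {e}"
  proof (rule S2_sub)
    fix w z assume w: "w \<in> V" "z \<in> V" "adj \<theta> y' w" "\<theta> w s \<noteq> 1" "adj \<theta> w z" "z \<noteq> y'" "z \<noteq> s" "\<theta> z y' \<noteq> 1"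
    have wX: "w \<in> X"
    proof (rule ccontr)
      assume "w \<notin> X" hence wY: "w \<in> Y" using inXY w(1) by blast
      have "w \<noteq> y" using w(3) ya m1_nadj by blast
      moreover have "w \<noteq> y'" using w(3) adjne by blast
      ultimately show False using tY[OF wY] w(4) by blast
    qed
    have "\<theta> y' w = 1" using YXa[OF wX y(2) w(3)] .
    moreover have "w \<noteq> y'" using wX y(2) XnY by blast
    ultimately have wy': "\<theta> w y' = 1" using symX[of y' w] V w(1) by simp
    show "z = e"
    proof (cases "w = a \<or> w = b")
      case True
      have "w \<noteq> e" using wy' ey' by auto
      hence we': "w = e'" using True e'(3) by blast
      show ?thesis
      proof (cases "z \<in> X")
        case True
        have "adj \<theta> e' e" using e'(2) adj_sym e'V by blast
        thus ?thesis using XA[OF e'(1) True eX] w(5) we' by blast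
      next
        case False
        hence zY: "z \<in> Y" using inXY w(2) by blast
        have "z \<noteq> y" using w(5) we' e'y m1_nadj by blast
        thus ?thesis using tY[OF zY] w(6,8) by blast
      qed
    next
      case False
      hence wab: "w \<noteq> a" "w \<noteq> b" by auto
      have ws: "w \<noteq> s" using w(3) ys m1_nadj by blast
      have nws: "\<not> adj \<theta> s w"
      proof
        assume sw: "adj \<theta> s w"
        have "adj \<theta> w s" using adj_sym[of s w] V(1) w(1) sw by simp
        hence "\<theta> w s \<noteq> -1" unfolding adj_def by auto
        hence "\<theta> w s = 0" using vals[of w s] V w(1,4) ws by auto
        hence "{w, s} = {a, b}" by (intro uq[rule_format]) (use V w(1) ws in auto)
        hence "w \<in> {a, b}" by (metis insertI1)
        thus False using wab by simp
      qed
      have wy: "\<theta> w y = -1" using XYP[OF wX y(1,2)] wy' y unfolding antiadj_def by auto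
      show ?thesis
      proof (cases "z \<in> X")
        case False
        hence zY: "z \<in> Y" using inXY w(2) by blast
        have "z \<noteq> y" using w(5) wy m1_nadj by blast
        thus ?thesis using tY[OF zY] w(6,8) by blast
      next
        case True
        have zw: "adj \<theta> z w" using w(5) adj_sym w(1,2) by blast
        have zab: "z \<noteq> a" "z \<noteq> b"
        proof -
          show "z \<noteq> a"
          proof
            assume "z = a" thus False using noab[OF wX wab] w(5) by simp
          qed
          show "z \<noteq> b"
          proof
            assume "z = b" thus False using noab'[OF wX wab] w(5) by simp
          qed
        qed
        have "w \<noteq> y" using wX y(1) XnY by blast
        hence "\<theta> y w = -1" using symX[of w y] wy w(1) yV by simp
        hence "\<theta> y z = 1" using YXP[OF y(1) wX True w(5)] by auto
        moreover have "z \<noteq> y" using True y(1) XnY by blast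
        ultimately have zy: "\<theta> z y = 1" using symX[of y z] yV w(2) by simp
        have "\<not> adj \<theta> s z"
        proof
          assume "adj \<theta> s z"
          hence "adj \<theta> z s" using adj_sym V w(2) by blast
          moreover have "adj \<theta> z w" using w(5) adj_sym w(1,2) by blast
          ultimately have "w = s" using XA[OF True wX s(1)] by blast
          thus False using ws by simp
        qed
        thus ?thesis using nos True zab w(7) zy by blast
      qed
    qed
  qed
qed

end

context dg begin

lemma adj_XY: "u \<in> V \<Longrightarrow> v \<in> V \<Longrightarrow> \<theta> u v = 1 \<Longrightarrow> u \<noteq> v \<Longrightarrow> adj \<theta> u v" unfolding adj_def by simp

lemma partA:
  assumes cF: "class_F V \<theta>" and noC6: "\<not> (\<exists>hs. is_antihole V \<theta> hs \<and> length hs = 6)"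
  shows "complete_tg V \<theta> \<or> (\<exists>u v. Gp V \<theta> u v)"
proof (cases "\<exists>x\<in>X. \<exists>s\<in>Y. (\<forall>w\<in>Y. w \<noteq> s \<longrightarrow> \<theta> w s = 1) \<and> \<theta> x s = -1")
  case True
  then obtain x s where "x \<in> X" "s \<in> Y" "\<forall>w\<in>Y. w \<noteq> s \<longrightarrow> \<theta> w s = 1" "\<theta> x s = -1" by blast
  thus ?thesis using L_I by blast
next
  case False
  hence nI: "\<And>x s. x \<in> X \<Longrightarrow> s \<in> Y \<Longrightarrow> (\<forall>w\<in>Y. w \<noteq> s \<longrightarrow> \<theta> w s = 1) \<Longrightarrow> \<theta> x s \<noteq> -1" by blast
  have singc: "\<And>x s. x \<in> X \<Longrightarrow> s \<in> Y \<Longrightarrow> (\<forall>w\<in>Y. w \<noteq> s \<longrightarrow> \<theta> w s = 1) \<Longrightarrow> \<theta> s x = 1"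
  proof -
    fix x s assume h: "x \<in> X" "s \<in> Y" "\<forall>w\<in>Y. w \<noteq> s \<longrightarrow> \<theta> w s = 1"
    have "\<theta> x s = 1" using nI[OF h] XYv[OF h(1,2)] by auto
    moreover have "x \<noteq> s" using h XnY by blast
    ultimately show "\<theta> s x = 1" using symX[of x s] h XV YV by simp
  qed
  show ?thesis
  proof (cases "\<exists>a\<in>X. \<exists>b\<in>X. adj \<theta> a b")
    case True
    then obtain a b where ab: "a \<in> X" "b \<in> X" "adj \<theta> a b" by blast
    have aV: "a \<in> V" "b \<in> V" "a \<noteq> b" using ab XV adjne by auto
    have ba: "adj \<theta> b a" using ab(3) adj_sym aV by blast
    have noS: "\<And>s. s \<in> Y \<Longrightarrow> \<exists>w\<in>Y. w \<noteq> s \<and> antiadj \<theta> s w"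
    proof (rule ccontr)
      fix s assume s: "s \<in> Y" and n: "\<not> (\<exists>w\<in>Y. w \<noteq> s \<and> antiadj \<theta> s w)"
      have sg: "\<forall>w\<in>Y. w \<noteq> s \<longrightarrow> \<theta> w s = 1"
      proof (intro ballI impI)
        fix w assume "w \<in> Y" "w \<noteq> s"
        hence "\<not> antiadj \<theta> s w" using n by blast
        hence "\<theta> s w = 1" using nanti[of s w] s \<open>w \<in> Y\<close> \<open>w \<noteq> s\<close> YV by auto
        thus "\<theta> w s = 1" using symX[of s w] s \<open>w \<in> Y\<close> \<open>w \<noteq> s\<close> YV by auto
      qed
      have "\<theta> s a = 1" "\<theta> s b = 1" using singc[OF ab(1) s sg] singc[OF ab(2) s sg] by auto
      thus False using YXP[OF s ab] by auto
    qed
    show ?thesis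
    proof (cases "Y = {}")
      case True
      show ?thesis
      proof (cases "\<exists>u\<in>X. \<exists>v\<in>X. u \<noteq> v \<and> \<not> adj \<theta> u v")
        case True
        then obtain u v where uv: "u \<in> X" "v \<in> X" "u \<noteq> v" "\<not> adj \<theta> u v" by blast
        have "\<theta> u v = -1" using nadj uv XV by blast
        hence "Gp V \<theta> u v" using L_XX[OF uv(1,2,3)] \<open>Y = {}\<close> by blast
        thus ?thesis by blast
      next
        case False
        have "complete_tg V \<theta>" unfolding complete_tg_def clique_def
        proof (intro ballI impI)
          fix u v assume "u \<in> V" "v \<in> V" "u \<noteq> v"
          thus "adj \<theta> u v" using False XY \<open>Y = {}\<close> by blast
        qed
        thus ?thesis by blast
      qed
    next
      case False
      then obtain y where y: "y \<in> Y" by blast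
      obtain y' where y': "y' \<in> Y" "y' \<noteq> y" "antiadj \<theta> y y'" using noS[OF y] by blast
      have yy: "antiadj \<theta> y' y" using y' y anti_sym YV by blast
      have Yeq: "Y = {y, y'}"
      proof (rule ccontr)
        assume "Y \<noteq> {y, y'}"
        then obtain w where w: "w \<in> Y" "w \<noteq> y" "w \<noteq> y'" using y y' by blast
        obtain w' where w': "w' \<in> Y" "w' \<noteq> w" "antiadj \<theta> w w'" using noS[OF w(1)] by blast
        have "w' \<noteq> y"
        proof
          assume "w' = y"
          hence "antiadj \<theta> y w" using w' anti_sym YV w(1) by blast
          thus False using YA[OF y w(1) y'(1) _ y'(3)] w(3) by blast
        qed
        moreover have "w' \<noteq> y'"
        proof
          assume "w' = y'"
          hence "antiadj \<theta> y' w" using w' anti_sym YV w(1) by blast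
          thus False using YA[OF y'(1) w(1) y _ yy] w(2) by blast
        qed
        ultimately have "\<exists>hs. is_antihole V \<theta> hs \<and> length hs = 6"
          using C6[OF ab y y'(1) w(1) w'(1) y'(3) w'(3)] w by blast
        thus False using noC6 by blast
      qed
      obtain c c' where cc: "c \<in> X" "c' \<in> X" "adj \<theta> c c'" "\<theta> c y = 1" "{c, c'} = {a, b}"
      proof (cases "\<theta> a y = 1")
        case True thus ?thesis using that[of a b] ab by blast
      next
        case False
        hence "\<theta> a y = -1" using XYv ab y by blast
        hence "\<theta> y a = -1" using symX[of a y] aV y YV ab XnY by auto
        hence "\<theta> y b = 1" using YXP[OF y ab] by auto
        hence "\<theta> b y = 1" using symX[of y b] aV y YV ab XnY by auto
        thus ?thesis using that[of b a] ab ba by blast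
      qed
      have cV: "c \<in> V" "c' \<in> V" "c \<noteq> c'" using cc XV adjne by auto
      have c'c: "adj \<theta> c' c" using cc(3) adj_sym cV by blast
      have cy': "\<theta> c y' = -1" using XYP[OF cc(1) y y'(1) y'(3)] cc(4) by auto
      have "\<theta> y c = 1" using symX[of c y] cV y YV cc XnY by auto
      hence "\<theta> y c' = -1" using YXP[OF y cc(1,2,3)] by auto
      hence c'y: "\<theta> c' y = -1" using symX[of y c'] cV y YV cc XnY by auto
      hence c'y': "\<theta> c' y' = 1" using XYP[OF cc(2) y y'(1) y'(3)] by auto
      show ?thesis
      proof (cases "X = {c, c'}")
        case True
        have "Gp V \<theta> c y'" using L_P4[OF cc(1,2,3) True y y'(1) y'(3) Yeq cc(4)] .
        thus ?thesis by blast
      next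
        case False
        then obtain x where x: "x \<in> X" "x \<noteq> c" "x \<noteq> c'" using cc by blast
        have ncx: "\<not> adj \<theta> c x" using XA[OF cc(1) cc(2) x(1) cc(3)] x(3) by blast
        have nc'x: "\<not> adj \<theta> c' x" using XA[OF cc(2) cc(1) x(1) c'c] x(2) by blast
        have oth: "\<And>u v. \<forall>w\<in>Y. w \<noteq> y \<longrightarrow> w \<noteq> y' \<longrightarrow> \<theta> w u = 1 \<and> \<theta> w v = 1" using Yeq by blast
        have oth': "\<And>u v. \<forall>w\<in>Y. w \<noteq> y' \<longrightarrow> w \<noteq> y \<longrightarrow> \<theta> w u = 1 \<and> \<theta> w v = 1" using Yeq by blast
        show ?thesis
        proof (cases "\<theta> x y = 1")
          case True
          have "Gp V \<theta> c x" using L_SS[OF cc(1) x(1) x(2)[symmetric] ncx y y'(1) y'(3) cc(4) True oth] .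
          thus ?thesis by blast
        next
          case False
          hence "\<theta> x y' = 1" using XYP[OF x(1) y y'(1) y'(3)] by auto
          hence "Gp V \<theta> c' x" using L_SS[OF cc(2) x(1) x(3)[symmetric] nc'x y'(1) y yy c'y' _ oth'] by blast
          thus ?thesis by blast
        qed
      qed
    qed
  next
    case False
    hence noX: "\<forall>a\<in>X. \<forall>b\<in>X. \<not> adj \<theta> a b" by blast
    show ?thesis
    proof (cases "\<exists>y\<in>Y. \<exists>y'\<in>Y. y \<noteq> y' \<and> \<theta> y y' = -1")
      case True
      then obtain y y' where "y \<in> Y" "y' \<in> Y" "y \<noteq> y'" "\<theta> y y' = -1" by blast
      thus ?thesis using L_II noX by blast
    next
      case False
      hence noY: "\<And>y y'. y \<in> Y \<Longrightarrow> y' \<in> Y \<Longrightarrow> y \<noteq> y' \<Longrightarrow> \<theta> y y' \<noteq> -1" by blast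
      have sgl: "\<And>t. t \<in> Y \<Longrightarrow> (\<forall>w\<in>Y. w \<noteq> t \<longrightarrow> \<theta> w t \<noteq> 0) \<Longrightarrow> \<forall>w\<in>Y. w \<noteq> t \<longrightarrow> \<theta> w t = 1"
      proof (intro ballI impI)
        fix t w assume t: "t \<in> Y" "\<forall>w\<in>Y. w \<noteq> t \<longrightarrow> \<theta> w t \<noteq> 0" and w: "w \<in> Y" "w \<noteq> t"
        show "\<theta> w t = 1" using vals[of w t] noY[OF w(1) t(1) w(2)] t(2) w YV t(1) by auto
      qed
      show ?thesis
      proof (cases "\<exists>y\<in>Y. \<exists>y'\<in>Y. y \<noteq> y' \<and> \<theta> y y' = 0")
        case True
        then obtain y y' where y: "y \<in> Y" "y' \<in> Y" "y \<noteq> y'" "\<theta> y y' = 0" by blast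
        have yV: "y \<in> V" "y' \<in> V" using y YV by auto
        have ayy: "antiadj \<theta> y y'" using y unfolding antiadj_def by simp
        have ayy': "antiadj \<theta> y' y" using ayy anti_sym yV by blast
        have y'y: "\<theta> y' y = 0" using symX[of y y'] yV y by simp
        have oth: "\<And>t. t \<in> Y \<Longrightarrow> t \<noteq> y \<Longrightarrow> t \<noteq> y' \<Longrightarrow> (\<forall>w\<in>Y. w \<noteq> t \<longrightarrow> \<theta> w t = 1) \<and> (\<forall>x\<in>X. \<theta> t x = 1)"
        proof -
          fix t assume t: "t \<in> Y" "t \<noteq> y" "t \<noteq> y'"
          have "\<forall>w\<in>Y. w \<noteq> t \<longrightarrow> \<theta> w t \<noteq> 0"
          proof (intro ballI impI)
            fix w assume w: "w \<in> Y" "w \<noteq> t"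
            show "\<theta> w t \<noteq> 0"
            proof
              assume "\<theta> w t = 0"
              hence "{w, t} = {y, y'}" using sw_uniq[OF cF _ _ w(2) _ yV y(3,4)] w t YV by blast
              thus False using t by (metis doubleton_eq_iff)
            qed
          qed
          hence sg: "\<forall>w\<in>Y. w \<noteq> t \<longrightarrow> \<theta> w t = 1" using sgl[OF t(1)] by blast
          have "\<forall>x\<in>X. \<theta> t x = 1" using singc[OF _ t(1) sg] by blast
          thus "(\<forall>w\<in>Y. w \<noteq> t \<longrightarrow> \<theta> w t = 1) \<and> (\<forall>x\<in>X. \<theta> t x = 1)" using sg by blast
        qed
        have oth2: "\<forall>t\<in>Y. t \<noteq> y \<longrightarrow> t \<noteq> y' \<longrightarrow> (\<forall>w\<in>Y. w \<noteq> t \<longrightarrow> \<theta> w t = 1) \<and> (\<forall>x\<in>X. \<theta> t x = 1)"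
          using oth by blast
        have oth2': "\<forall>t\<in>Y. t \<noteq> y' \<longrightarrow> t \<noteq> y \<longrightarrow> (\<forall>w\<in>Y. w \<noteq> t \<longrightarrow> \<theta> w t = 1) \<and> (\<forall>x\<in>X. \<theta> t x = 1)"
          using oth by blast
        show ?thesis
        proof (cases "\<exists>u\<in>X. \<exists>v\<in>X. u \<noteq> v \<and> \<theta> u y = \<theta> v y")
          case True
          then obtain u v where uv: "u \<in> X" "v \<in> X" "u \<noteq> v" "\<theta> u y = \<theta> v y" by blast
          have uvV: "u \<in> V" "v \<in> V" using uv XV by auto
          have m: "\<theta> u v = -1" using nadj[OF uvV uv(3)] noX uv by blast
          have c1: "\<forall>w\<in>Y. adj \<theta> u w \<longrightarrow> \<theta> w v = 1"
          proof (intro ballI impI)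
            fix w assume w: "w \<in> Y" "adj \<theta> u w"
            have uw: "\<theta> u w = 1" using XYa[OF uv(1) w(1) w(2)] .
            have vne: "v \<noteq> w" using uv(2) w(1) XnY by blast
            have "\<theta> v w = 1"
            proof (cases "w = y")
              case True thus ?thesis using uw uv(4) by simp
            next
              case False
              show ?thesis
              proof (cases "w = y'")
                case True
                have "\<theta> u y = -1" using XYP[OF uv(1) y(1,2) ayy] uw True by auto
                hence "\<theta> v y = -1" using uv(4) by simp
                thus ?thesis using XYP[OF uv(2) y(1,2) ayy] True by auto
              next
                case False2: False
                have "\<theta> w v = 1" using oth[OF w(1) False False2] uv(2) by blast
                thus ?thesis using symX[of w v] w(1) YV uvV vne by auto
              qed
            qed
            thus "\<theta> w v = 1" using symX[of v w] w(1) YV uvV vne by auto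
          qed
          have c2: "\<forall>u'\<in>X. adj \<theta> u u' \<longrightarrow> (\<forall>z\<in>Y. adj \<theta> u' z \<longrightarrow> \<theta> z u = 1)" using noX uv(1) by blast
          have "Gp V \<theta> u v" using L_XX[OF uv(1,2,3) m c1 c2] .
          thus ?thesis by blast
        next
          case False
          hence nos0: "\<And>u v. u \<in> X \<Longrightarrow> v \<in> X \<Longrightarrow> u \<noteq> v \<Longrightarrow> \<theta> u y \<noteq> \<theta> v y" by blast
          show ?thesis
          proof (cases "X = {}")
            case True
            have "complete_tg V \<theta>" unfolding complete_tg_def clique_def
            proof (intro ballI impI)
              fix u v assume uv: "u \<in> V" "v \<in> V" "u \<noteq> v"
              hence "u \<in> Y" "v \<in> Y" using XY True by auto
              thus "adj \<theta> u v" using noY uv adj_iff by blast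
            qed
            thus ?thesis by blast
          next
            case False
            then obtain x where x: "x \<in> X" by blast
            show ?thesis
            proof (cases "\<theta> x y' = -1")
              case True
              have xy: "\<theta> x y = 1" using XYP[OF x y(1,2) ayy] True by auto
              have nos: "\<forall>x2\<in>X. x2 \<noteq> x \<longrightarrow> \<theta> x2 y \<noteq> 1" using nos0[OF _ x] xy by fastforce
              have "Gp V \<theta> x y'" using L_4a2[OF noX y(1,2) ayy oth2 x True nos] .
              thus ?thesis by blast
            next
              case False
              hence xy': "\<theta> x y' = 1" using XYv[OF x y(2)] by auto
              hence xy: "\<theta> x y = -1" using XYP[OF x y(1,2) ayy] by auto
              have nos: "\<forall>x2\<in>X. x2 \<noteq> x \<longrightarrow> \<theta> x2 y' \<noteq> 1"
              proof (intro ballI impI)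
                fix x2 assume "x2 \<in> X" "x2 \<noteq> x"
                hence "\<theta> x2 y \<noteq> -1" using nos0[OF _ x] xy by fastforce
                thus "\<theta> x2 y' \<noteq> 1" using XYP[OF \<open>x2 \<in> X\<close> y(1,2) ayy] by auto
              qed
              have "Gp V \<theta> x y" using L_4a2[OF noX y(2,1) ayy' oth2' x xy nos] .
              thus ?thesis by blast
            qed
          qed
        qed
      next
        case False
        hence allsg: "\<And>t. t \<in> Y \<Longrightarrow> \<forall>w\<in>Y. w \<noteq> t \<longrightarrow> \<theta> w t = 1" using sgl by blast
        show ?thesis
        proof (cases "\<exists>u\<in>X. \<exists>v\<in>X. u \<noteq> v")
          case True
          then obtain u v where uv: "u \<in> X" "v \<in> X" "u \<noteq> v" by blast
          have m: "\<theta> u v = -1" using nadj[of u v] uv XV noX by blast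
          have c1: "\<forall>w\<in>Y. adj \<theta> u w \<longrightarrow> \<theta> w v = 1" using singc[OF uv(2) _ allsg] by blast
          have c2: "\<forall>u'\<in>X. adj \<theta> u u' \<longrightarrow> (\<forall>z\<in>Y. adj \<theta> u' z \<longrightarrow> \<theta> z u = 1)" using noX uv(1) by blast
          have "Gp V \<theta> u v" using L_XX[OF uv m c1 c2] .
          thus ?thesis by blast
        next
          case False
          have "complete_tg V \<theta>" unfolding complete_tg_def clique_def
          proof (intro ballI impI)
            fix u v assume uv: "u \<in> V" "v \<in> V" "u \<noteq> v"
            show "adj \<theta> u v"
            proof (cases "u \<in> X")
              case True
              hence vY: "v \<in> Y" using False uv XY by blast
              have "\<theta> v u = 1" using singc[OF True vY allsg[OF vY]] .
              hence "\<theta> u v = 1" using symX[of v u] uv by auto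
              thus ?thesis using uv adj_XY by blast
            next
              case False2: False
              hence uY: "u \<in> Y" using uv XY by blast
              show ?thesis
              proof (cases "v \<in> X")
                case True
                have "\<theta> u v = 1" using singc[OF True uY allsg[OF uY]] .
                thus ?thesis using uv adj_XY by blast
              next
                case False
                hence "v \<in> Y" using uv XY by blast
                hence "\<theta> u v = 1" using allsg[OF \<open>v \<in> Y\<close>] uY uv by blast
                thus ?thesis using uv adj_XY by blast
              qed
            qed
          qed
          thus ?thesis by blast
        qed
      qed
    qed
  qed
qed

end

context dg begin

lemma DY_case:
  assumes Yeq: "Y = {r, r'}" and rr: "r \<noteq> r'" "antiadj \<theta> r r'"
    and ncl: "\<not> clique \<theta> (V - ({r, r'} \<union> nbhd V \<theta> r))"
  shows "\<exists>w z. Gp V \<theta> w z \<and> w \<notin> {r, r'} \<and> z \<notin> {r, r'}"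
proof -
  obtain w z where wz: "w \<in> V - ({r, r'} \<union> nbhd V \<theta> r)" "z \<in> V - ({r, r'} \<union> nbhd V \<theta> r)"
      "w \<noteq> z" "\<not> adj \<theta> w z"
    using ncl unfolding clique_def by blast
  have rY: "r \<in> Y" "r' \<in> Y" using Yeq by auto
  have rV: "r \<in> V" "r' \<in> V" using rY YV by auto
  have ar: "antiadj \<theta> r' r" using rr anti_sym rV by blast
  have side: "\<And>x. x \<in> V - ({r, r'} \<union> nbhd V \<theta> r) \<Longrightarrow> x \<in> X \<and> \<theta> x r' = 1"
  proof -
    fix x assume x: "x \<in> V - ({r, r'} \<union> nbhd V \<theta> r)"
    hence xX: "x \<in> X" using Yeq XY by blast
    have "\<not> adj \<theta> r x" using x unfolding nbhd_def by blast
    moreover have "r \<noteq> x" using x by blast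
    ultimately have "\<theta> r x = -1" using nadj rV x by blast
    hence "\<theta> x r = -1" using symX[of r x] rV x \<open>r \<noteq> x\<close> by auto
    hence "\<theta> x r' = 1" using XYP[OF xX rY(2) rY(1) ar] by auto
    thus "x \<in> X \<and> \<theta> x r' = 1" using xX by simp
  qed
  have w: "w \<in> X" "\<theta> w r' = 1" using side[OF wz(1)] by auto
  have z: "z \<in> X" "\<theta> z r' = 1" using side[OF wz(2)] by auto
  have oth: "\<forall>t\<in>Y. t \<noteq> r' \<longrightarrow> t \<noteq> r \<longrightarrow> \<theta> t w = 1 \<and> \<theta> t z = 1" using Yeq by blast
  have "Gp V \<theta> w z" using L_SS[OF w(1) z(1) wz(3,4) rY(2) rY(1) ar w(2) z(2) oth] .
  thus ?thesis using wz by blast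
qed

lemma DX_tail:
  assumes a: "a \<in> X" "b \<in> X" "adj \<theta> a b"
    and uq: "\<forall>p\<in>V. \<forall>q\<in>V. p \<noteq> q \<longrightarrow> \<theta> p q = 0 \<longrightarrow> {p, q} = {a, b}"
    and y: "y \<in> Y" "y' \<in> Y" "y \<noteq> y'" "\<theta> y y' = -1"
    and s: "s \<in> X" "s \<noteq> a" "s \<noteq> b" "\<theta> s y = 1" "\<theta> s y' = -1"
    and oth: "\<forall>t\<in>Y. t \<noteq> y \<longrightarrow> t \<noteq> y' \<longrightarrow> (\<forall>w\<in>Y. w \<noteq> t \<longrightarrow> \<theta> w t = 1) \<and> (\<forall>x\<in>X. x \<noteq> a \<longrightarrow> x \<noteq> b \<longrightarrow> \<theta> t x = 1)"
  shows "\<exists>u v. Gp V \<theta> u v \<and> u \<notin> {a, b} \<and> v \<notin> {a, b}"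
proof -
  have ayy: "antiadj \<theta> y y'" using y unfolding antiadj_def by simp
  show ?thesis
  proof (cases "\<exists>v\<in>X. v \<noteq> a \<and> v \<noteq> b \<and> v \<noteq> s \<and> \<not> adj \<theta> s v \<and> \<theta> v y = 1")
    case True
    then obtain v where v: "v \<in> X" "v \<noteq> a" "v \<noteq> b" "v \<noteq> s" "\<not> adj \<theta> s v" "\<theta> v y = 1" by blast
    have o: "\<forall>w\<in>Y. w \<noteq> y \<longrightarrow> w \<noteq> y' \<longrightarrow> \<theta> w s = 1 \<and> \<theta> w v = 1" using oth s v by blast
    have "Gp V \<theta> s v" using L_SS[OF s(1) v(1) v(4)[symmetric] v(5) y(1,2) ayy s(4) v(6) o] .
    thus ?thesis using s v by blast
  next
    case False
    hence nos: "\<forall>v\<in>X. v \<noteq> a \<longrightarrow> v \<noteq> b \<longrightarrow> v \<noteq> s \<longrightarrow> \<not> adj \<theta> s v \<longrightarrow> \<theta> v y \<noteq> 1" by blast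
    have aV: "a \<in> V" "b \<in> V" "y \<in> V" using a y XV YV by auto
    obtain e where e: "e = a \<or> e = b" "\<theta> e y = 1"
    proof (cases "\<theta> y a = 1")
      case True
      hence "\<theta> a y = 1" using symX[of y a] aV a y XnY by metis
      thus ?thesis using that by blast
    next
      case False
      hence "\<theta> y b = 1" using YXP[OF y(1) a] by auto
      hence "\<theta> b y = 1" using symX[of y b] aV a y XnY by metis
      thus ?thesis using that by blast
    qed
    have "Gp V \<theta> s y'" using L_sz[OF a y(1,2,4,3) s(1,2,3,5) e oth nos uq] .
    moreover have "y' \<notin> {a, b}" using a y XnY by blast
    ultimately show ?thesis using s by blast
  qed
qed


lemma DX_case:
  assumes noC6: "\<not> (\<exists>hs. is_antihole V \<theta> hs \<and> length hs = 6)"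
    and a: "a \<in> X" "b \<in> X" "adj \<theta> a b"
    and uq: "\<forall>p\<in>V. \<forall>q\<in>V. p \<noteq> q \<longrightarrow> \<theta> p q = 0 \<longrightarrow> {p, q} = {a, b}"
    and F2: "\<exists>u\<in>V. \<exists>v\<in>V. u \<noteq> v \<and> \<theta> u v = -1 \<and> u \<notin> {a, b} \<and> v \<notin> {a, b}"
    and F3: "\<not> clique \<theta> (V - ({a, b} \<union> nbhd V \<theta> a)) \<or> \<not> clique \<theta> (V - ({a, b} \<union> nbhd V \<theta> b))"
  shows "\<exists>u v. Gp V \<theta> u v \<and> u \<notin> {a, b} \<and> v \<notin> {a, b}"
proof (cases "\<exists>x\<in>X. x \<noteq> a \<and> x \<noteq> b \<and> (\<exists>s\<in>Y. (\<forall>w\<in>Y. w \<noteq> s \<longrightarrow> \<theta> w s = 1) \<and> \<theta> x s = -1)")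
  case True
  then obtain x s where xs: "x \<in> X" "x \<noteq> a" "x \<noteq> b" "s \<in> Y" "\<forall>w\<in>Y. w \<noteq> s \<longrightarrow> \<theta> w s = 1" "\<theta> x s = -1"
    by blast
  have "Gp V \<theta> x s" using L_I[OF xs(1,4,5,6)] .
  moreover have "s \<notin> {a, b}" using xs(4) a XnY by blast
  ultimately show ?thesis using xs by blast
next
  case False
  have singc: "\<And>x s. x \<in> X \<Longrightarrow> x \<noteq> a \<Longrightarrow> x \<noteq> b \<Longrightarrow> s \<in> Y \<Longrightarrow> (\<forall>w\<in>Y. w \<noteq> s \<longrightarrow> \<theta> w s = 1) \<Longrightarrow> \<theta> s x = 1"
  proof -
    fix x s assume h: "x \<in> X" "x \<noteq> a" "x \<noteq> b" "s \<in> Y" "\<forall>w\<in>Y. w \<noteq> s \<longrightarrow> \<theta> w s = 1"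
    have "\<theta> x s \<noteq> -1" using False h by blast
    hence "\<theta> x s = 1" using XYv[OF h(1,4)] by auto
    moreover have "x \<noteq> s" using h XnY by blast
    ultimately show "\<theta> s x = 1" using symX[of x s] h XV YV by simp
  qed
  have aV: "a \<in> V" "b \<in> V" "a \<noteq> b" using a XV adjne by auto
  show ?thesis
  proof (cases "\<exists>y\<in>Y. \<exists>y'\<in>Y. y \<noteq> y' \<and> antiadj \<theta> y y'")
    case False
    have sg: "\<And>t. t \<in> Y \<Longrightarrow> \<forall>w\<in>Y. w \<noteq> t \<longrightarrow> \<theta> w t = 1"
    proof (intro ballI impI)
      fix t w assume "t \<in> Y" "w \<in> Y" "w \<noteq> t"
      hence "\<not> antiadj \<theta> w t" using False by blast
      thus "\<theta> w t = 1" using nanti[of w t] \<open>t \<in> Y\<close> \<open>w \<in> Y\<close> \<open>w \<noteq> t\<close> YV by blast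
    qed
    obtain u v where uv: "u \<in> V" "v \<in> V" "u \<noteq> v" "\<theta> u v = -1" "u \<notin> {a, b}" "v \<notin> {a, b}"
      using F2 by blast
    have vu: "\<theta> v u = -1" using symX[of u v] uv by auto
    have uX: "u \<in> X"
    proof (rule ccontr)
      assume "u \<notin> X" hence uY: "u \<in> Y" using inXY uv(1) by blast
      show False
      proof (cases "v \<in> X")
        case True thus False using singc[OF True _ _ uY sg[OF uY]] uv(4,6) by auto
      next
        case False hence "v \<in> Y" using inXY uv(2) by blast
        thus False using sg[OF uY] uv(3) vu by auto
      qed
    qed
    have vX: "v \<in> X"
    proof (rule ccontr)
      assume "v \<notin> X" hence vY: "v \<in> Y" using inXY uv(2) by blast
      thus False using singc[OF uX _ _ vY sg[OF vY]] uv(5) vu by auto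
    qed
    have c1: "\<forall>w\<in>Y. adj \<theta> u w \<longrightarrow> \<theta> w v = 1" using singc[OF vX _ _ _ sg] uv(6) by blast
    have c2: "\<forall>u'\<in>X. adj \<theta> u u' \<longrightarrow> (\<forall>z\<in>Y. adj \<theta> u' z \<longrightarrow> \<theta> z u = 1)"
      using singc[OF uX _ _ _ sg] uv(5) by blast
    have "Gp V \<theta> u v" using L_XX[OF uX vX uv(3,4) c1 c2] .
    thus ?thesis using uv by blast
  next
    case True
    then obtain y y' where y: "y \<in> Y" "y' \<in> Y" "y \<noteq> y'" "antiadj \<theta> y y'" by blast
    have yV: "y \<in> V" "y' \<in> V" using y YV by auto
    have ayy': "antiadj \<theta> y' y" using y(4) anti_sym yV by blast
    have ym: "\<theta> y y' = -1"
    proof -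
      have "\<theta> y y' \<noteq> 0"
      proof
        assume "\<theta> y y' = 0"
        hence "{y, y'} = {a, b}" using uq yV y(3) by blast
        hence "y \<in> {a, b}" by (metis insertI1)
        thus False using y(1) a XnY by blast
      qed
      thus ?thesis using y(4) unfolding antiadj_def by auto
    qed
    have y'm: "\<theta> y' y = -1" using symX[of y y'] yV y(3) ym by simp
    have sgt: "\<And>t. t \<in> Y \<Longrightarrow> t \<noteq> y \<Longrightarrow> t \<noteq> y' \<Longrightarrow> \<forall>w\<in>Y. w \<noteq> t \<longrightarrow> \<theta> w t = 1"
    proof (intro ballI impI)
      fix t w assume t: "t \<in> Y" "t \<noteq> y" "t \<noteq> y'" and w: "w \<in> Y" "w \<noteq> t"
      show "\<theta> w t = 1"
      proof (rule ccontr)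
        assume "\<theta> w t \<noteq> 1"
        hence wt: "antiadj \<theta> w t" using ne1_anti[of w t] w t YV by blast
        hence tw: "antiadj \<theta> t w" using anti_sym w t YV by blast
        have "w \<noteq> y"
        proof
          assume "w = y" thus False using YA[OF y(1) t(1) y(2) _ y(4)] wt t(3) by blast
        qed
        moreover have "w \<noteq> y'"
        proof
          assume "w = y'" thus False using YA[OF y(2) t(1) y(1) _ ayy'] wt t(2) by blast
        qed
        ultimately have "\<exists>hs. is_antihole V \<theta> hs \<and> length hs = 6"
          using C6[OF a y(1,2) t(1) w(1) y(4) tw] t by blast
        thus False using noC6 by blast
      qed
    qed
    have oth: "\<forall>t\<in>Y. t \<noteq> y \<longrightarrow> t \<noteq> y' \<longrightarrow> (\<forall>w\<in>Y. w \<noteq> t \<longrightarrow> \<theta> w t = 1) \<and> (\<forall>x\<in>X. x \<noteq> a \<longrightarrow> x \<noteq> b \<longrightarrow> \<theta> t x = 1)"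
      using sgt singc by blast
    have oth': "\<forall>t\<in>Y. t \<noteq> y' \<longrightarrow> t \<noteq> y \<longrightarrow> (\<forall>w\<in>Y. w \<noteq> t \<longrightarrow> \<theta> w t = 1) \<and> (\<forall>x\<in>X. x \<noteq> a \<longrightarrow> x \<noteq> b \<longrightarrow> \<theta> t x = 1)"
      using oth by blast
    have "\<exists>s\<in>X. s \<noteq> a \<and> s \<noteq> b"
    proof (rule ccontr)
      assume "\<not> ?thesis"
      hence Xs: "\<And>x. x \<in> X \<Longrightarrow> x = a \<or> x = b" by blast
      have cl: "\<And>r. r \<in> X \<Longrightarrow> clique \<theta> (V - ({a, b} \<union> nbhd V \<theta> r))"
        unfolding clique_def
      proof (intro ballI impI)
        fix r w z assume r: "r \<in> X" and w: "w \<in> V - ({a, b} \<union> nbhd V \<theta> r)" and z: "z \<in> V - ({a, b} \<union> nbhd V \<theta> r)"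
          and wz: "w \<noteq> z"
        have wY: "w \<in> Y" using w Xs XY by blast
        have zY: "z \<in> Y" using z Xs XY by blast
        have nrw: "\<not> adj \<theta> r w" "\<not> adj \<theta> r z" using w z unfolding nbhd_def by auto
        show "adj \<theta> w z"
        proof (rule ccontr)
          assume "\<not> adj \<theta> w z"
          hence "\<theta> w z = -1" using nadj wY zY wz YV by blast
          hence zw: "\<theta> z w = -1" using symX[of w z] wY zY wz YV by simp
          have wyy: "w = y \<or> w = y'" using sgt[OF wY] zY wz zw by force
          have zyy: "z = y \<or> z = y'" using sgt[OF zY] wY wz \<open>\<theta> w z = -1\<close> by force
          have "\<theta> r y = 1 \<or> \<theta> r y' = 1" using XYP[OF r y(1,2,4)] by auto
          moreover have "r \<noteq> y" "r \<noteq> y'" using r y XnY by auto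
          ultimately have "adj \<theta> r y \<or> adj \<theta> r y'" unfolding adj_def by auto
          thus False using wyy zyy wz nrw by blast
        qed
      qed
      thus False using F3 cl a by blast
    qed
    then obtain s where s: "s \<in> X" "s \<noteq> a" "s \<noteq> b" by blast
    show ?thesis
    proof (cases "\<theta> s y = 1")
      case True
      hence "\<theta> s y' = -1" using XYP[OF s(1) y(1,2,4)] by auto
      thus ?thesis using DX_tail[OF a uq y(1,2,3) ym s True _ oth] by blast
    next
      case False
      hence sy: "\<theta> s y = -1" using XYv[OF s(1) y(1)] by auto
      hence "\<theta> s y' = 1" using XYP[OF s(1) y(1,2,4)] by auto
      thus ?thesis using DX_tail[OF a uq y(2,1) y(3)[symmetric] y'm s _ sy oth'] by blast
    qed
  qed
qed


lemma partB:
  assumes cF: "class_F V \<theta>" and noC6: "\<not> (\<exists>hs. is_antihole V \<theta> hs \<and> length hs = 6)"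
    and F2: "\<exists>u\<in>V. \<exists>v\<in>V. u \<noteq> v \<and> \<theta> u v = -1 \<and> u \<notin> sw_D V \<theta> \<and> v \<notin> sw_D V \<theta>"
    and F3: "\<forall>x y. x \<noteq> y \<and> sw_D V \<theta> = {x, y} \<longrightarrow>
        \<not> clique \<theta> (V - (sw_D V \<theta> \<union> nbhd V \<theta> x)) \<or>
        \<not> clique \<theta> (V - (sw_D V \<theta> \<union> nbhd V \<theta> y))"
  shows "\<exists>u v. Gp V \<theta> u v \<and> u \<notin> sw_D V \<theta> \<and> v \<notin> sw_D V \<theta>"
proof (cases "\<exists>p\<in>V. \<exists>q\<in>V. p \<noteq> q \<and> \<theta> p q = 0")
  case True
  then obtain p q where pq: "p \<in> V" "q \<in> V" "p \<noteq> q" "\<theta> p q = 0" by blast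
  have D: "sw_D V \<theta> = {p, q}" using swD_pair[OF cF pq] .
  have uq: "\<forall>p'\<in>V. \<forall>q'\<in>V. p' \<noteq> q' \<longrightarrow> \<theta> p' q' = 0 \<longrightarrow> {p', q'} = {p, q}"
    using sw_uniq[OF cF _ _ _ _ pq] by blast
  have F3': "\<not> clique \<theta> (V - ({p, q} \<union> nbhd V \<theta> p)) \<or> \<not> clique \<theta> (V - ({p, q} \<union> nbhd V \<theta> q))"
    using F3 pq(3) D by metis
  have F2': "\<exists>u\<in>V. \<exists>v\<in>V. u \<noteq> v \<and> \<theta> u v = -1 \<and> u \<notin> {p, q} \<and> v \<notin> {p, q}"
    using F2 D by simp
  show ?thesis
  proof (cases "p \<in> X")
    case True
    have qX: "q \<in> X" using XY0[OF True] pq inXY by blast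
    have apq: "adj \<theta> p q" using pq unfolding adj_def by simp
    show ?thesis using DX_case[OF noC6 True qX apq uq F2' F3'] D by simp
  next
    case False
    hence pY: "p \<in> Y" using inXY pq by blast
    have qY: "q \<in> Y" using YX0[OF _ pY] pq inXY by blast
    have apq: "antiadj \<theta> p q" using pq unfolding antiadj_def by simp
    have aqp: "antiadj \<theta> q p" using apq anti_sym pq by blast
    have sm: "nbhd V \<theta> p \<inter> nbhd V \<theta> q = {}" using sw_small[OF cF pq] .
    have Yeq: "Y = {p, q}"
    proof (rule ccontr)
      assume "Y \<noteq> {p, q}"
      then obtain w where w: "w \<in> Y" "w \<noteq> p" "w \<noteq> q" using pY qY by blast
      have wV: "w \<in> V" using w YV by auto
      have "\<not> antiadj \<theta> p w" using YA[OF pY w(1) qY _ apq] w(3) by blast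
      hence "\<theta> p w = 1" using nanti[of p w] pq wV w by auto
      hence pw: "adj \<theta> p w" using w(2) unfolding adj_def by auto
      have "\<not> antiadj \<theta> q w" using YA[OF qY w(1) pY _ aqp] w(2) by blast
      hence "\<theta> q w = 1" using nanti[of q w] pq wV w by auto
      hence qw: "adj \<theta> q w" using w(3) unfolding adj_def by auto
      have "w \<in> nbhd V \<theta> p \<inter> nbhd V \<theta> q" using pw qw wV unfolding nbhd_def by blast
      thus False using sm by blast
    qed
    show ?thesis
    proof (cases "\<not> clique \<theta> (V - ({p, q} \<union> nbhd V \<theta> p))")
      case True
      thus ?thesis using DY_case[OF Yeq pq(3) apq] D by simp
    next
      case False
      hence nc: "\<not> clique \<theta> (V - ({q, p} \<union> nbhd V \<theta> q))" using F3' by (simp add: insert_commute)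
      have Yeq': "Y = {q, p}" using Yeq by blast
      have "\<exists>w z. Gp V \<theta> w z \<and> w \<notin> {q, p} \<and> z \<notin> {q, p}" using DY_case[OF Yeq' pq(3)[symmetric] aqp nc] .
      thus ?thesis using D by blast
    qed
  qed
next
  case False
  have D: "sw_D V \<theta> = {}"
  proof -
    have "\<And>u. u \<notin> sw_D V \<theta>"
    proof
      fix u assume "u \<in> sw_D V \<theta>"
      then obtain w where h: "u \<in> V" "w \<in> V" "w \<noteq> u" "\<theta> u w = 0" using swD_iff[OF tg] by blast
      have "\<exists>p\<in>V. \<exists>q\<in>V. p \<noteq> q \<and> \<theta> p q = 0" using h by (intro bexI[of _ u] bexI[of _ w]) auto
      thus False using False by blast
    qed
    thus ?thesis by blast
  qed
  obtain u v where uv: "u \<in> V" "v \<in> V" "u \<noteq> v" "\<theta> u v = -1" using F2 by blast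
  have "\<not> complete_tg V \<theta>"
  proof
    assume "complete_tg V \<theta>"
    hence "adj \<theta> u v" using uv unfolding complete_tg_def clique_def by blast
    thus False using uv(4) unfolding adj_def by simp
  qed
  hence "\<exists>u v. Gp V \<theta> u v" using partA[OF cF noC6] by blast
  thus ?thesis using D by blast
qed

end

theorem theorem4p11:
  fixes V :: "'a set" and \<theta> :: "'a \<Rightarrow> 'a \<Rightarrow> int"
  assumes "class_F V \<theta>" and "doubled_graph V \<theta>"
    and "\<not> (\<exists>hs. is_antihole V \<theta> hs \<and> length hs = 6)"
  shows "(complete_tg V \<theta> \<or> (\<exists>u v. even_pair V \<theta> u v)) \<and>
         (favorable V \<theta> \<longrightarrow>
            (\<exists>u v. even_pair V \<theta> u v \<and> u \<notin> sw_D V \<theta> \<and> v \<notin> sw_D V \<theta>))"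
proof -
  obtain X Y where gp: "good_partition V \<theta> X Y" using assms(2) unfolding doubled_graph_def by blast
  have tg: "trigraph V \<theta>" using assms(1) unfolding class_F_def berge_def by blast
  interpret dg V \<theta> X Y using tg gp by (rule dg.intro)
  have A: "complete_tg V \<theta> \<or> (\<exists>u v. even_pair V \<theta> u v)"
    using partA[OF assms(1,3)] Gp_even[OF tg] by blast
  have B: "favorable V \<theta> \<longrightarrow> (\<exists>u v. even_pair V \<theta> u v \<and> u \<notin> sw_D V \<theta> \<and> v \<notin> sw_D V \<theta>)"
  proof
    assume fav: "favorable V \<theta>"
    have F2: "\<exists>u\<in>V. \<exists>v\<in>V. u \<noteq> v \<and> \<theta> u v = -1 \<and> u \<notin> sw_D V \<theta> \<and> v \<notin> sw_D V \<theta>"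
      using fav unfolding favorable_def by blast
    have F3: "\<forall>x y. x \<noteq> y \<and> sw_D V \<theta> = {x, y} \<longrightarrow>
        \<not> clique \<theta> (V - (sw_D V \<theta> \<union> nbhd V \<theta> x)) \<or>
        \<not> clique \<theta> (V - (sw_D V \<theta> \<union> nbhd V \<theta> y))"
      using fav unfolding favorable_def by blast
    show "\<exists>u v. even_pair V \<theta> u v \<and> u \<notin> sw_D V \<theta> \<and> v \<notin> sw_D V \<theta>"
      using partB[OF assms(1,3) F2 F3] Gp_even[OF tg] by blast
  qed
  show ?thesis using A B by blast
qed

end
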